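(* Let $G$ be the automorphism group of $(\mathbb{Q},<)$ and let $f \in G$. Then there do NOT exist $g, g_1, g_2 \in G$ such that $g$ is a restriction of $f$, $g_1$ is a bump which is an orbital of $g$, $g = g_1 g_2$, and $g$ is conjugate in $G$ to $g_2$, if and only if $f$ has only finitely many non-trivial orbitals.
   Context: For $f \in G$, an orbital of $f$ is an equivalence class of $\mathbb{Q}$ under $a \sim b$ iff there are integers $m,n$ with $f^m a \le b \le f^n a$; it is non-trivial if it has more than one point. The support of an element of $G$ is the set of points it moves. A bump is a non-identity element of $G$ with exactly one non-trivial orbital. An element $g$ is a restriction of $f$ if the support of $g$ is contained in that of $f$ and $g$ agrees with $f$ on the support of $g$. An element $g_1$ is an orbital of $g$ if $g_1$ is a bump whose support is contained in that of $g$ and $g_1$ agrees with $g$ on its support. *)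

theory Defs
  imports Complex_Main
begin

definition AutQ :: "(rat \<Rightarrow> rat) set" where
  "AutQ = {f. bij f \<and> strict_mono f}"

definition ipow :: "(rat \<Rightarrow> rat) \<Rightarrow> int \<Rightarrow> (rat \<Rightarrow> rat)" where
  "ipow f n = (if 0 \<le> n then f ^^ nat n else (inv f) ^^ nat (- n))"

definition orbital_at :: "(rat \<Rightarrow> rat) \<Rightarrow> rat \<Rightarrow> rat set" where
  "orbital_at f a = {b. \<exists>m n :: int. ipow f m a \<le> b \<and> b \<le> ipow f n a}"

definition orbitals :: "(rat \<Rightarrow> rat) \<Rightarrow> rat set set" where
  "orbitals f = range (orbital_at f)"

definition nontrivial_orbitals :: "(rat \<Rightarrow> rat) \<Rightarrow> rat set set" where
  "nontrivial_orbitals f = {U \<in> orbitals f. \<exists>x y. x \<in> U \<and> y \<in> U \<and> x \<noteq> y}"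

definition supp :: "(rat \<Rightarrow> rat) \<Rightarrow> rat set" where
  "supp f = {x. f x \<noteq> x}"

definition is_bump :: "(rat \<Rightarrow> rat) \<Rightarrow> bool" where
  "is_bump f \<longleftrightarrow> f \<in> AutQ \<and> f \<noteq> id \<and> (\<exists>!U. U \<in> nontrivial_orbitals f)"

definition is_restriction :: "(rat \<Rightarrow> rat) \<Rightarrow> (rat \<Rightarrow> rat) \<Rightarrow> bool" where
  "is_restriction g f \<longleftrightarrow> supp g \<subseteq> supp f \<and> (\<forall>x \<in> supp g. g x = f x)"

definition is_orbital_elem :: "(rat \<Rightarrow> rat) \<Rightarrow> (rat \<Rightarrow> rat) \<Rightarrow> bool" where
  "is_orbital_elem g1 g \<longleftrightarrow> is_bump g1 \<and> supp g1 \<subseteq> supp g \<and> (\<forall>x \<in> supp g1. g1 x = g x)"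

definition conj_in_AutQ :: "(rat \<Rightarrow> rat) \<Rightarrow> (rat \<Rightarrow> rat) \<Rightarrow> bool" where
  "conj_in_AutQ a b \<longleftrightarrow> (\<exists>h \<in> AutQ. b = inv h \<circ> a \<circ> h)"

end

theory Submission
  imports Defs "HOL-Library.Countable"
begin


lemma AutQ_D: "f \<in> AutQ \<Longrightarrow> bij f \<and> strict_mono f"
  by (simp add: AutQ_def)

lemma bij_inv_comp1: "bij f \<Longrightarrow> f \<circ> inv f = id"
  by (simp add: fun_eq_iff bij_is_surj surj_f_inv_f)
lemma bij_inv_comp2: "bij f \<Longrightarrow> inv f \<circ> f = id"
  by (simp add: fun_eq_iff bij_is_inj inv_f_f)

lemma ipow_0[simp]: "ipow f 0 = id" by (simp add: ipow_def)

lemma ipow_succ: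
  assumes "bij f" shows "ipow f (n+1) = f \<circ> ipow f n"
proof (cases "n \<ge> 0")
  case True
  then have "nat (n+1) = Suc (nat n)" by simp
  then show ?thesis using True by (simp add: ipow_def)
next
  case False
  show ?thesis
  proof (cases "n = -1")
    case True
    then show ?thesis using bij_inv_comp1[OF assms] by (simp add: ipow_def)
  next
    case False2: False
    then have "nat (-n) = Suc (nat (-(n+1)))" using False by simp
    then have "ipow f n = inv f \<circ> ipow f (n+1)" using False False2 by (simp add: ipow_def)
    then have "f \<circ> ipow f n = (f \<circ> inv f) \<circ> ipow f (n+1)" by (simp add: comp_assoc)
    then show ?thesis using bij_inv_comp1[OF assms] by simp
  qed
qed

lemma ipow_pred:
  assumes "bij f" shows "ipow f (n - 1) = inv f \<circ> ipow f n"
proof -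
  have "ipow f n = f \<circ> ipow f (n-1)" using ipow_succ[OF assms, of "n-1"] by simp
  then have "inv f \<circ> ipow f n = (inv f \<circ> f) \<circ> ipow f (n-1)" by (simp add: comp_assoc)
  then show ?thesis using bij_inv_comp2[OF assms] by simp
qed

lemma ipow_add:
  assumes "bij f" shows "ipow f (m + n) = ipow f m \<circ> ipow f n"
proof (induct m rule: int_induct[where k=0])
  case base then show ?case by simp
next
  case (step1 i)
  have "ipow f (i + 1 + n) = ipow f ((i + n) + 1)" by (simp add: ac_simps)
  also have "\<dots> = f \<circ> ipow f (i+n)" by (rule ipow_succ[OF assms])
  also have "\<dots> = (f \<circ> ipow f i) \<circ> ipow f n" using step1 by (simp add: fun_eq_iff)
  also have "\<dots> = ipow f (i+1) \<circ> ipow f n" by (simp add: ipow_succ[OF assms])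
  finally show ?case .
next
  case (step2 i)
  have "ipow f (i - 1 + n) = ipow f ((i + n) - 1)" by (simp add: algebra_simps)
  also have "\<dots> = inv f \<circ> ipow f (i+n)" by (rule ipow_pred[OF assms])
  also have "\<dots> = (inv f \<circ> ipow f i) \<circ> ipow f n" using step2 by (simp add: fun_eq_iff)
  also have "\<dots> = ipow f (i - 1) \<circ> ipow f n" by (simp add: ipow_pred[OF assms])
  finally show ?case .
qed

lemma ipow_add_app: "bij f \<Longrightarrow> ipow f (m + n) x = ipow f m (ipow f n x)"
  by (simp add: ipow_add)

lemma ipow_1: "bij f \<Longrightarrow> ipow f 1 = f"
  using ipow_succ[of f 0] by simp

lemma ipow_m1: "bij f \<Longrightarrow> ipow f (-1) = inv f"
  using ipow_pred[of f 0] by simp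

lemma ipow_inv_cancel: "bij f \<Longrightarrow> ipow f (-n) (ipow f n x) = x"
  using ipow_add_app[of f "-n" n x] by simp
lemma ipow_inv_cancel2: "bij f \<Longrightarrow> ipow f n (ipow f (-n) x) = x"
  using ipow_add_app[of f n "-n" x] by simp

lemma bij_ipow: "bij f \<Longrightarrow> bij (ipow f n)"
  by (metis bij_betw_def inj_on_inverseI ipow_inv_cancel ipow_inv_cancel2 surj_def)

lemma strict_mono_inv:
  fixes f :: "rat \<Rightarrow> rat"
  assumes "bij f" "strict_mono f" shows "strict_mono (inv f)"
proof (rule strict_monoI)
  fix x y :: rat assume "x < y"
  have fx: "f (inv f x) = x" "f (inv f y) = y" using assms(1) by (simp_all add: bij_is_surj surj_f_inv_f)
  show "inv f x < inv f y"
  proof (rule ccontr)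
    assume "\<not> inv f x < inv f y"
    then have "inv f y \<le> inv f x" by simp
    then have "f (inv f y) \<le> f (inv f x)" using assms(2) by (simp add: strict_mono_less_eq)
    then show False using fx \<open>x<y\<close> by simp
  qed
qed

lemma strict_mono_funpow: "strict_mono (f::rat\<Rightarrow>rat) \<Longrightarrow> strict_mono (f ^^ n)"
  by (induct n) (auto simp: strict_mono_def)

lemma strict_mono_ipow:
  fixes f :: "rat \<Rightarrow> rat"
  assumes "f \<in> AutQ" shows "strict_mono (ipow f n)"
  using assms strict_mono_inv[of f] strict_mono_funpow
  by (auto simp: ipow_def AutQ_def)

lemma ipow_AutQ: "f \<in> AutQ \<Longrightarrow> ipow f n \<in> AutQ"
  using strict_mono_ipow bij_ipow by (auto simp: AutQ_def)

lemma inv_AutQ: "f \<in> AutQ \<Longrightarrow> inv f \<in> AutQ"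
  using strict_mono_inv by (auto simp: AutQ_def bij_imp_bij_inv)

lemma ipow_mono_iff: "f \<in> AutQ \<Longrightarrow> ipow f n x \<le> ipow f n y \<longleftrightarrow> x \<le> y"
  using strict_mono_ipow strict_mono_less_eq by blast
lemma ipow_less_iff: "f \<in> AutQ \<Longrightarrow> ipow f n x < ipow f n y \<longleftrightarrow> x < y"
  using strict_mono_ipow strict_mono_less by blast

lemma ipow_conj:
  assumes "bij g" "bij g2" "bij h" "h \<circ> g2 = g \<circ> h"
  shows "ipow g n \<circ> h = h \<circ> ipow g2 n"
proof (induct n rule: int_induct[where k=0])
  case base then show ?case by simp
next
  case (step1 i)
  have "ipow g (i+1) \<circ> h = g \<circ> (ipow g i \<circ> h)" by (simp add: ipow_succ[OF assms(1)] comp_assoc)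
  also have "\<dots> = (g \<circ> h) \<circ> ipow g2 i" using step1 by (simp add: fun_eq_iff)
  also have "\<dots> = h \<circ> (g2 \<circ> ipow g2 i)" using assms(4) by (metis comp_assoc)
  finally show ?case by (simp add: ipow_succ[OF assms(2)])
next
  case (step2 i)
  have "g \<circ> (ipow g (i - 1) \<circ> h) = ipow g i \<circ> h"
    using ipow_succ[OF assms(1), of "i-1"] by (simp add: comp_assoc)
  also have "\<dots> = h \<circ> ipow g2 i" by (rule step2)
  also have "\<dots> = h \<circ> (g2 \<circ> ipow g2 (i-1))" using ipow_succ[OF assms(2), of "i-1"] by simp
  also have "\<dots> = g \<circ> (h \<circ> ipow g2 (i-1))" using assms(4) by (metis comp_assoc)
  finally have "g \<circ> (ipow g (i - 1) \<circ> h) = g \<circ> (h \<circ> ipow g2 (i-1))" .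
  then have "\<And>x. g ((ipow g (i - 1) \<circ> h) x) = g ((h \<circ> ipow g2 (i-1)) x)"
    by (metis comp_apply)
  then show ?case using assms(1) by (simp add: fun_eq_iff bij_is_inj inj_eq del: comp_apply)
qed


lemma orb_mem_iff: "b \<in> orbital_at f a \<longleftrightarrow> (\<exists>m n. ipow f m a \<le> b \<and> b \<le> ipow f n a)"
  by (simp add: orbital_at_def)

lemma orb_refl: "a \<in> orbital_at f a"
  unfolding orb_mem_iff by (rule exI[of _ 0], rule exI[of _ 0]) simp

lemma orb_ipow: "ipow f k a \<in> orbital_at f a"
  unfolding orb_mem_iff by blast

lemma orb_f: "f \<in> AutQ \<Longrightarrow> f a \<in> orbital_at f a"
  using orb_ipow[of f 1 a] ipow_1[of f] by (simp add: AutQ_def)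
lemma orb_invf: "f \<in> AutQ \<Longrightarrow> inv f a \<in> orbital_at f a"
  using orb_ipow[of f "-1" a] ipow_m1[of f] by (simp add: AutQ_def)

lemma orb_sym:
  assumes "f \<in> AutQ" "b \<in> orbital_at f a" shows "a \<in> orbital_at f b"
proof -
  obtain m n where mn: "ipow f m a \<le> b" "b \<le> ipow f n a" using assms(2) orb_mem_iff by blast
  have bij: "bij f" using assms(1) AutQ_D by blast
  have "ipow f (-n) b \<le> ipow f (-n) (ipow f n a)" using mn(2) ipow_mono_iff[OF assms(1)] by blast
  then have 1: "ipow f (-n) b \<le> a" using ipow_inv_cancel[OF bij] by simp
  have "ipow f (-m) (ipow f m a) \<le> ipow f (-m) b" using mn(1) ipow_mono_iff[OF assms(1)] by blast
  then have 2: "a \<le> ipow f (-m) b" using ipow_inv_cancel[OF bij] by simp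
  show ?thesis using 1 2 orb_mem_iff by blast
qed

lemma orb_trans:
  assumes "f \<in> AutQ" "b \<in> orbital_at f a" "c \<in> orbital_at f b" shows "c \<in> orbital_at f a"
proof -
  have bij: "bij f" using assms(1) AutQ_D by blast
  obtain m n where mn: "ipow f m a \<le> b" "b \<le> ipow f n a" using assms(2) orb_mem_iff by blast
  obtain p q where pq: "ipow f p b \<le> c" "c \<le> ipow f q b" using assms(3) orb_mem_iff by blast
  have "ipow f (p+m) a = ipow f p (ipow f m a)" by (simp add: ipow_add_app[OF bij])
  also have "\<dots> \<le> ipow f p b" using mn(1) ipow_mono_iff[OF assms(1)] by blast
  finally have 1: "ipow f (p+m) a \<le> c" using pq(1) by simp
  have "c \<le> ipow f q b" by (rule pq(2))
  also have "\<dots> \<le> ipow f q (ipow f n a)" using mn(2) ipow_mono_iff[OF assms(1)] by blast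
  also have "\<dots> = ipow f (q+n) a" by (simp add: ipow_add_app[OF bij])
  finally show ?thesis using 1 orb_mem_iff by blast
qed

lemma orb_eq:
  assumes "f \<in> AutQ" "b \<in> orbital_at f a" shows "orbital_at f b = orbital_at f a"
  using orb_trans[OF assms(1)] orb_sym[OF assms(1)] assms(2) by blast

lemma orb_disj:
  assumes "f \<in> AutQ" "orbital_at f a \<noteq> orbital_at f b" shows "orbital_at f a \<inter> orbital_at f b = {}"
  using orb_eq[OF assms(1)] assms(2) by blast

lemma orb_convex:
  assumes "x \<in> orbital_at f a" "z \<in> orbital_at f a" "x \<le> y" "y \<le> z" shows "y \<in> orbital_at f a"
  using assms unfolding orb_mem_iff by (meson order_trans)

lemma orb_fixed_ipow:
  assumes "f \<in> AutQ" "f x = x" shows "ipow f n x = x"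
proof -
  have bij: "bij f" using assms(1) AutQ_D by blast
  have ix: "inv f x = x" using assms(2) bij by (metis bij_is_inj inv_f_f)
  show ?thesis
  proof (induct n rule: int_induct[where k=0])
    case base then show ?case by simp
  next
    case (step1 i) then show ?case using assms(2) by (simp add: ipow_succ[OF bij])
  next
    case (step2 i) then show ?case using ix by (simp add: ipow_pred[OF bij])
  qed
qed

lemma orb_fixed: "f \<in> AutQ \<Longrightarrow> f x = x \<Longrightarrow> orbital_at f x = {x}"
  using orb_fixed_ipow[of f x] by (auto simp: orb_mem_iff)

lemma orb_moved:
  assumes "f \<in> AutQ" "f a \<noteq> a" "y \<in> orbital_at f a" shows "f y \<noteq> y"
proof
  assume "f y = y"
  then have "orbital_at f y = {y}" using orb_fixed assms(1) by blast
  moreover have "orbital_at f y = orbital_at f a" using orb_eq assms by blast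
  ultimately show False using orb_refl[of a f] orb_f[OF assms(1), of a] assms(2) by auto
qed

lemma NO_eq: "f \<in> AutQ \<Longrightarrow> nontrivial_orbitals f = orbital_at f ` supp f"
proof (auto simp: nontrivial_orbitals_def orbitals_def supp_def)
  fix a x y assume A: "f \<in> AutQ" "x \<in> orbital_at f a" "y \<in> orbital_at f a" "x \<noteq> y"
  show "orbital_at f a \<in> orbital_at f ` {x. f x \<noteq> x}"
  proof (cases "f a = a")
    case True then show ?thesis using orb_fixed A by auto
  next
    case False then show ?thesis by auto
  qed
next
  fix x assume A: "f \<in> AutQ" "f x \<noteq> x"
  show "\<exists>xa. xa \<in> orbital_at f x \<and> (\<exists>y. y \<in> orbital_at f x \<and> xa \<noteq> y)"
    using orb_refl[of x f] orb_f[OF A(1), of x] A(2) by metis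
qed

lemma orb_inv_mem:
  assumes "f \<in> AutQ" "y \<in> orbital_at f a" shows "f y \<in> orbital_at f a" "inv f y \<in> orbital_at f a"
  using orb_trans[OF assms(1) assms(2)] orb_f[OF assms(1)] orb_invf[OF assms(1)] by blast+

lemma agree_ipow:
  assumes g: "g \<in> AutQ" and f: "f \<in> AutQ"
    and T: "\<And>y. y \<in> T \<Longrightarrow> g y = f y \<and> g y \<in> T \<and> inv g y \<in> T" and x: "x \<in> T"
  shows "ipow g n x = ipow f n x \<and> ipow g n x \<in> T"
proof (induct n rule: int_induct[where k=0])
  case base then show ?case using x by simp
next
  case (step1 i)
  have bg: "bij g" and bf: "bij f" using g f AutQ_D by blast+
  show ?case using step1 T[of "ipow g i x"] by (simp add: ipow_succ[OF bg] ipow_succ[OF bf]) metis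
next
  case (step2 i)
  have bg: "bij g" and bf: "bij f" using g f AutQ_D by blast+
  let ?y = "ipow g i x"
  have yT: "?y \<in> T" using step2 by blast
  have "g (inv g ?y) = ?y" using bg by (simp add: bij_is_surj surj_f_inv_f)
  moreover have "g (inv g ?y) = f (inv g ?y)" using T[of "inv g ?y"] T[OF yT] by blast
  ultimately have "inv f ?y = inv g ?y" using bf by (metis bij_is_inj inv_f_f)
  then show ?case using step2 T[OF yT] by (simp add: ipow_pred[OF bg] ipow_pred[OF bf])
qed

lemma agree_orb:
  assumes g: "g \<in> AutQ" and f: "f \<in> AutQ"
    and T: "\<And>y. y \<in> T \<Longrightarrow> g y = f y \<and> g y \<in> T \<and> inv g y \<in> T" and x: "x \<in> T"
  shows "orbital_at g x = orbital_at f x"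
  using agree_ipow[OF g f T x] by (simp add: orbital_at_def)

definition lt_set :: "rat set \<Rightarrow> rat set \<Rightarrow> bool" where
  "lt_set A B \<longleftrightarrow> (\<forall>x\<in>A. \<forall>y\<in>B. x < y)"

lemma orb_ordered:
  assumes "f \<in> AutQ" "x < y" "orbital_at f x \<noteq> orbital_at f y"
  shows "lt_set (orbital_at f x) (orbital_at f y)"
  unfolding lt_set_def
proof (intro ballI)
  fix u v assume uv: "u \<in> orbital_at f x" "v \<in> orbital_at f y"
  have D: "orbital_at f x \<inter> orbital_at f y = {}" using orb_disj assms by blast
  show "u < v"
  proof (rule ccontr)
    assume "\<not> u < v"
    then have "v \<le> u" by simp
    show False
    proof (cases "y \<le> u")
      case True
      then have "y \<in> orbital_at f x" using orb_convex[OF orb_refl uv(1)] assms(2) by simp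
      then show ?thesis using D orb_refl[of y f] by blast
    next
      case False
      then have "u \<in> orbital_at f y" using orb_convex[OF uv(2) orb_refl] \<open>v \<le> u\<close> by simp
      then show ?thesis using D uv(1) by blast
    qed
  qed
qed

lemma orb_trichotomy:
  "y \<in> orbital_at f a \<or> lt_set {y} (orbital_at f a) \<or> lt_set (orbital_at f a) {y}"
proof -
  { assume "\<not> lt_set {y} (orbital_at f a)" "\<not> lt_set (orbital_at f a) {y}"
    then obtain u v where "u \<in> orbital_at f a" "v \<in> orbital_at f a" "u \<le> y" "y \<le> v"
      by (auto simp: lt_set_def not_less)
    then have "y \<in> orbital_at f a" using orb_convex by blast }
  then show ?thesis by blast
qed

definition restr :: "(rat \<Rightarrow> rat) \<Rightarrow> rat set \<Rightarrow> rat \<Rightarrow> rat" where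
  "restr f S = (\<lambda>x. if x \<in> S then f x else x)"

lemma bij_from_mono_surj:
  fixes h :: "rat \<Rightarrow> rat"
  assumes "strict_mono h" "\<And>y. \<exists>x. h x = y" shows "h \<in> AutQ"
  using assms by (auto simp: AutQ_def bij_def strict_mono_imp_inj_on surj_def) metis

lemma restr_AutQ:
  assumes f: "f \<in> AutQ" and S: "\<And>x. x \<in> S \<Longrightarrow> orbital_at f x \<subseteq> S"
  shows "restr f S \<in> AutQ"
proof (rule bij_from_mono_surj)
  have sm: "strict_mono f" using f AutQ_D by blast
  show "strict_mono (restr f S)"
  proof (rule strict_monoI)
    fix x y :: rat assume xy: "x < y"
    show "restr f S x < restr f S y"
    proof (cases "x \<in> S")
      case xS: True
      show ?thesis
      proof (cases "y \<in> S")
        case True then show ?thesis using xS xy sm by (simp add: restr_def strict_mono_less)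
      next
        case False
        have "f x < y"
        proof (rule ccontr)
          assume "\<not> f x < y"
          then have "y \<in> orbital_at f x" using orb_convex[OF orb_refl orb_f[OF f]] xy by simp
          then show False using S[OF xS] False by blast
        qed
        then show ?thesis using xS False by (simp add: restr_def)
      qed
    next
      case xS: False
      show ?thesis
      proof (cases "y \<in> S")
        case True
        have "x < f y"
        proof (rule ccontr)
          assume "\<not> x < f y"
          have "inv f y \<in> orbital_at f y" using orb_invf[OF f] by blast
          have "x \<in> orbital_at f y" using orb_convex[OF orb_f[OF f] orb_refl] xy \<open>\<not> x < f y\<close> by simp
          then show False using S[OF True] xS by blast
        qed
        then show ?thesis using xS True by (simp add: restr_def)
      next
        case False then show ?thesis using xS xy by (simp add: restr_def)
      qed
    qed
  qed
next
  fix y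
  have bf: "bij f" using f AutQ_D by blast
  show "\<exists>x. restr f S x = y"
  proof (cases "y \<in> S")
    case True
    have "inv f y \<in> S" using S[OF True] orb_invf[OF f] by blast
    then show ?thesis using bf by (auto simp: restr_def bij_is_surj surj_f_inv_f intro!: exI[of _ "inv f y"])
  next
    case False then show ?thesis by (auto simp: restr_def)
  qed
qed

lemma restr_orb:
  assumes f: "f \<in> AutQ" and S: "\<And>x. x \<in> S \<Longrightarrow> orbital_at f x \<subseteq> S" and x: "x \<in> S"
  shows "orbital_at (restr f S) x = orbital_at f x"
proof (rule agree_orb[OF restr_AutQ[OF f S] f _ x])
  fix y assume y: "y \<in> S"
  let ?g = "restr f S"
  have gA: "?g \<in> AutQ" using restr_AutQ[OF f S] .
  have fy: "f y \<in> S" using S[OF y] orb_f[OF f] by blast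
  have iy: "inv f y \<in> S" using S[OF y] orb_invf[OF f] by blast
  have "?g (inv f y) = y" using iy f AutQ_D by (simp add: restr_def bij_is_surj surj_f_inv_f)
  then have "inv ?g y = inv f y" using gA AutQ_D by (metis bij_is_inj inv_f_f)
  then show "?g y = f y \<and> ?g y \<in> S \<and> inv ?g y \<in> S" using y fy iy by (simp add: restr_def)
qed

lemma restr_supp:
  assumes "S \<subseteq> supp f" shows "supp (restr f S) = S"
  using assms by (auto simp: supp_def restr_def)


lemma supp_inv:
  assumes g: "g \<in> AutQ" and y: "y \<in> supp g" shows "g y \<in> supp g" "inv g y \<in> supp g"
proof -
  have bg: "bij g" using g AutQ_D by blast
  show "g y \<in> supp g" using y bg by (auto simp: supp_def dest: bij_is_inj injD)
  show "inv g y \<in> supp g"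
  proof (rule ccontr)
    assume "inv g y \<notin> supp g"
    then have "g (inv g y) = inv g y" by (simp add: supp_def)
    then have "y = inv g y" using bg by (simp add: bij_is_surj surj_f_inv_f)
    then have "g y = y" using bg by (metis bij_is_surj surj_f_inv_f)
    then show False using y by (simp add: supp_def)
  qed
qed

lemma conj_orb:
  assumes g: "g \<in> AutQ" and g2: "g2 \<in> AutQ" and h: "h \<in> AutQ" and c: "h \<circ> g2 = g \<circ> h"
  shows "orbital_at g2 x = h -` orbital_at g (h x)"
proof -
  have bg: "bij g" "bij g2" "bij h" using g g2 h AutQ_D by blast+
  have e: "\<And>n y. ipow g n (h y) = h (ipow g2 n y)"
    using ipow_conj[OF bg c] by (metis comp_apply)
  show ?thesis
    using h by (auto simp: orbital_at_def e ipow_mono_iff[OF h] AutQ_def strict_mono_less_eq)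
qed

lemma vimage_inj_surj: "surj h \<Longrightarrow> inj_on (\<lambda>U. h -` U) X"
  by (auto simp: inj_on_def surj_vimage_empty) (metis surj_image_vimage_eq)+

theorem dir1:
  assumes f: "f \<in> AutQ" and fin: "finite (nontrivial_orbitals f)"
    and g: "g \<in> AutQ" and g1: "g1 \<in> AutQ" and g2: "g2 \<in> AutQ"
    and R: "is_restriction g f" and B: "is_bump g1" and OE: "is_orbital_elem g1 g"
    and gg: "g = g1 \<circ> g2" and C: "conj_in_AutQ g g2"
  shows False
proof -
  have bg: "bij g" "bij g1" "bij g2" using g g1 g2 AutQ_D by blast+
  have sub: "nontrivial_orbitals g \<subseteq> nontrivial_orbitals f"
  proof -
    have "orbital_at g x = orbital_at f x" if x: "x \<in> supp g" for x
    proof (rule agree_orb[OF g f _ x])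
      fix y assume "y \<in> supp g"
      then show "g y = f y \<and> g y \<in> supp g \<and> inv g y \<in> supp g"
        using R supp_inv[OF g] by (auto simp: is_restriction_def)
    qed
    moreover have "supp g \<subseteq> supp f" using R by (simp add: is_restriction_def)
    ultimately show ?thesis using NO_eq[OF g] NO_eq[OF f] by auto
  qed
  then have fing: "finite (nontrivial_orbitals g)" using fin finite_subset by blast
  obtain x0 where x0: "g1 x0 \<noteq> x0" using B by (auto simp: is_bump_def fun_eq_iff)
  define U1 where "U1 = orbital_at g1 x0"
  have U1in: "U1 \<in> nontrivial_orbitals g1" using NO_eq[OF g1] x0 by (auto simp: U1_def supp_def)
  have NOg1: "nontrivial_orbitals g1 = {U1}" using B U1in by (auto simp: is_bump_def)
  have suppg1: "supp g1 = U1"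
  proof
    show "supp g1 \<subseteq> U1"
    proof
      fix x assume "x \<in> supp g1"
      then have "orbital_at g1 x \<in> nontrivial_orbitals g1" using NO_eq[OF g1] by auto
      then have "orbital_at g1 x = U1" using NOg1 by auto
      then show "x \<in> U1" using orb_refl by metis
    qed
    show "U1 \<subseteq> supp g1" using orb_moved[OF g1 x0] by (auto simp: U1_def supp_def)
  qed
  have U1g: "U1 = orbital_at g x0"
    unfolding U1_def
  proof (rule agree_orb[OF g1 g, where T="supp g1"])
    fix y assume "y \<in> supp g1"
    then show "g1 y = g y \<and> g1 y \<in> supp g1 \<and> inv g1 y \<in> supp g1"
      using OE supp_inv[OF g1] by (auto simp: is_orbital_elem_def)
  next
    show "x0 \<in> supp g1" using x0 by (simp add: supp_def)
  qed
  have x0g: "x0 \<in> supp g" using OE x0 by (auto simp: is_orbital_elem_def supp_def)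
  have U1NOg: "U1 \<in> nontrivial_orbitals g" using U1g x0g NO_eq[OF g] by auto
  have g2eq: "g2 x = (if x \<in> U1 then x else g x)" for x
  proof (cases "x \<in> U1")
    case True
    have "g1 x = g x" using OE True suppg1 by (auto simp: is_orbital_elem_def)
    then have "g1 (g2 x) = g1 x" using gg by simp
    then show ?thesis using True bg(2) by (simp add: bij_is_inj inj_eq)
  next
    case False
    have "g x \<notin> U1"
    proof
      assume "g x \<in> U1"
      then have "inv g (g x) \<in> U1" using orb_inv_mem[OF g] U1g by blast
      then show False using False bg(1) by (simp add: bij_is_inj)
    qed
    then have "g1 (g x) = g x" using suppg1 by (auto simp: supp_def)
    then have "g1 (g2 x) = g1 (g x)" using gg by simp
    then show ?thesis using False bg(2) by (simp add: bij_is_inj inj_eq)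
  qed
  have suppg2: "supp g2 = supp g - U1" using g2eq by (auto simp: supp_def)
  have NOg2: "nontrivial_orbitals g2 = nontrivial_orbitals g - {U1}"
  proof -
    have "orbital_at g2 x = orbital_at g x" if x: "x \<in> supp g2" for x
    proof (rule agree_orb[OF g2 g _ x])
      fix y assume y: "y \<in> supp g2"
      then show "g2 y = g y \<and> g2 y \<in> supp g2 \<and> inv g2 y \<in> supp g2"
        using supp_inv[OF g2 y] suppg2 g2eq by auto
    qed
    then have 1: "nontrivial_orbitals g2 = orbital_at g ` (supp g - U1)"
      using NO_eq[OF g2] suppg2 by auto
    have 2: "orbital_at g x \<noteq> U1" if "x \<notin> U1" for x using that orb_refl by metis
    have 3: "orbital_at g x = U1" if "x \<in> U1" for x using that U1g orb_eq[OF g] by blast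
    show ?thesis unfolding 1 NO_eq[OF g] using 2 3 by blast
  qed
  obtain h where h: "h \<in> AutQ" and hg2: "g2 = inv h \<circ> g \<circ> h" using C by (auto simp: conj_in_AutQ_def)
  have bh: "bij h" using h AutQ_D by blast
  have c: "h \<circ> g2 = g \<circ> h" using hg2 bij_inv_comp1[OF bh] by (simp add: fun_eq_iff bij_is_surj surj_f_inv_f)
  have sg2: "supp g2 = h -` supp g"
  proof -
    have "g2 x \<noteq> x \<longleftrightarrow> g (h x) \<noteq> h x" for x
      using fun_cong[OF c, of x] bh by (metis bij_is_inj comp_apply inj_eq)
    then show ?thesis by (auto simp: supp_def)
  qed
  have "nontrivial_orbitals g2 = (\<lambda>x. h -` orbital_at g (h x)) ` (h -` supp g)"
    using NO_eq[OF g2] sg2 conj_orb[OF g g2 h c] by auto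
  also have "\<dots> = (\<lambda>U. h -` U) ` (orbital_at g ` (h ` (h -` supp g)))" by (simp only: image_image image_comp comp_def)
  also have "\<dots> = (\<lambda>U. h -` U) ` nontrivial_orbitals g"
    using bh NO_eq[OF g] by (simp add: bij_is_surj surj_image_vimage_eq)
  finally have "card (nontrivial_orbitals g2) = card (nontrivial_orbitals g)"
    using card_image[OF vimage_inj_surj] bh bij_is_surj by metis
  then have "card (nontrivial_orbitals g) - 1 = card (nontrivial_orbitals g)"
    using NOg2 card_Diff_singleton[OF U1NOg] by simp
  moreover have "card (nontrivial_orbitals g) > 0" using fing U1NOg card_gt_0_iff by blast
  ultimately show False by simp
qed


lemma piecewise_iso:
  fixes P Q :: "'i \<Rightarrow> rat set" and h :: "'i \<Rightarrow> rat \<Rightarrow> rat" and R :: "'i \<Rightarrow> 'i \<Rightarrow> bool"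
  assumes ord: "\<And>i j. R i j \<Longrightarrow> lt_set (P i) (P j) \<and> lt_set (Q i) (Q j)"
    and tot: "\<And>i j. i \<noteq> j \<Longrightarrow> R i j \<or> R j i"
    and hb: "\<And>i. bij_betw (h i) (P i) (Q i)" and hm: "\<And>i. strict_mono_on (P i) (h i)"
  shows "\<exists>H. bij_betw H (\<Union>i. P i) (\<Union>i. Q i) \<and> strict_mono_on (\<Union>i. P i) H \<and> (\<forall>i. \<forall>x\<in>P i. H x = h i x)"
proof -
  define H where "H = (\<lambda>x. h (SOME i. x \<in> P i) x)"
  have uniq: "i = j" if "x \<in> P i" "x \<in> P j" for x i j
  proof (rule ccontr)
    assume "i \<noteq> j"
    then have "lt_set (P i) (P j) \<or> lt_set (P j) (P i)" using tot ord by blast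
    then show False using that by (auto simp: lt_set_def)
  qed
  have Hx: "H x = h i x" if "x \<in> P i" for x i
  proof -
    have "(SOME i. x \<in> P i) = i" using that uniq by (metis someI)
    then show ?thesis by (simp add: H_def)
  qed
  have sm: "strict_mono_on (\<Union>i. P i) H"
  proof (rule strict_mono_onI)
    fix r s assume "r \<in> (\<Union>i. P i)" "s \<in> (\<Union>i. P i)" "r < s"
    then obtain i j where ij: "r \<in> P i" "s \<in> P j" by blast
    show "H r < H s"
    proof (cases "i = j")
      case True then show ?thesis using ij hm \<open>r<s\<close> Hx by (metis strict_mono_onD)
    next
      case False
      have "\<not> R j i" using ord ij \<open>r<s\<close> by (auto simp: lt_set_def) (meson less_asym)
      then have "R i j" using tot False by blast
      then have "lt_set (Q i) (Q j)" using ord by blast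
      moreover have "H r \<in> Q i" "H s \<in> Q j" using Hx[OF ij(1)] Hx[OF ij(2)] hb[of i] hb[of j] ij
        by (auto simp: bij_betw_def)
      ultimately show ?thesis by (auto simp: lt_set_def)
    qed
  qed
  have img: "H ` (\<Union>i. P i) = (\<Union>i. Q i)"
  proof
    show "H ` (\<Union>i. P i) \<subseteq> (\<Union>i. Q i)"
    proof
      fix y assume "y \<in> H ` (\<Union>i. P i)"
      then obtain x i where "x \<in> P i" "y = H x" by blast
      then have "y \<in> Q i" using Hx hb[of i] by (auto simp: bij_betw_def)
      then show "y \<in> (\<Union>i. Q i)" by blast
    qed
    show "(\<Union>i. Q i) \<subseteq> H ` (\<Union>i. P i)"
    proof
      fix y assume "y \<in> (\<Union>i. Q i)"
      then obtain j where "y \<in> Q j" by blast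
      then obtain x where "x \<in> P j" "y = h j x" using hb by (auto simp: bij_betw_def)
      then have "H x = y" "x \<in> (\<Union>i. P i)" using Hx by auto
      then show "y \<in> H ` (\<Union>i. P i)" by (metis image_eqI)
    qed
  qed
  have "inj_on H (\<Union>i. P i)" using sm strict_mono_on_imp_inj_on by blast
  then show ?thesis using sm img Hx by (auto simp: bij_betw_def)
qed

lemma affine_iso:
  fixes a b c d :: rat
  assumes "a < b" "c < d"
  shows "\<exists>\<phi>. bij_betw \<phi> {a..<b} {c..<d} \<and> strict_mono_on {a..<b} \<phi>"
proof -
  define k where "k = (d - c) / (b - a)"
  have k: "k > 0" using assms by (simp add: k_def)
  define \<phi> where "\<phi> = (\<lambda>x. c + (x - a) * k)"
  define \<psi> where "\<psi> = (\<lambda>y. a + (y - c) / k)"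
  have sm: "strict_mono \<phi>" using k by (auto simp: strict_mono_def \<phi>_def)
  have bk: "(b - a) * k = d - c" using assms by (simp add: k_def)
  have 1: "\<phi> ` {a..<b} \<subseteq> {c..<d}"
  proof
    fix y assume "y \<in> \<phi> ` {a..<b}"
    then obtain x where x: "a \<le> x" "x < b" "y = \<phi> x" by auto
    have "(x - a) * k \<ge> 0" using x k by simp
    moreover have "(x - a) * k < (b - a) * k" using x k by (simp add: mult_strict_right_mono)
    ultimately show "y \<in> {c..<d}" using x bk by (simp add: \<phi>_def)
  qed
  have 2: "{c..<d} \<subseteq> \<phi> ` {a..<b}"
  proof
    fix y assume y: "y \<in> {c..<d}"
    have e: "\<phi> (\<psi> y) = y" using k by (simp add: \<phi>_def \<psi>_def)
    have "(y - c) / k \<ge> 0" using y k by simp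
    moreover have "(y - c) / k < (d - c) / k" using y k by (simp add: divide_strict_right_mono)
    moreover have "(d - c) / k = b - a" using bk k by (simp add: field_simps)
    ultimately have "\<psi> y \<in> {a..<b}" by (simp add: \<psi>_def)
    then show "y \<in> \<phi> ` {a..<b}" using e by (metis image_eqI)
  qed
  have "inj_on \<phi> {a..<b}" using sm strict_mono_imp_inj_on inj_on_subset by blast
  then show ?thesis using 1 2 sm by (auto simp: bij_betw_def strict_mono_on_def strict_mono_def intro!: exI[of _ \<phi>])
qed

lemma strict_mono_int_step:
  fixes u :: "int \<Rightarrow> rat"
  assumes "\<And>k. u k < u (k+1)" shows "strict_mono u"
proof (rule strict_monoI)
  fix i j :: int assume "i < j"
  then obtain n where n: "j = i + 1 + int n" using zless_iff_Suc_zadd[of i j] by auto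
  have "u i < u (i + 1 + int n)" for n
  proof (induct n)
    case 0 then show ?case using assms[of i] by simp
  next
    case (Suc n)
    have "u (i + 1 + int n) < u ((i + 1 + int n) + 1)" by (rule assms)
    moreover have "(i + 1 + int n) + 1 = i + 1 + int (Suc n)" by simp
    ultimately show ?case using Suc by (metis less_trans)
  qed
  then show "u i < u j" using n by simp
qed

lemma zseq_iso:
  fixes u v :: "int \<Rightarrow> rat" and K :: "int set"
  assumes u: "strict_mono u" and v: "strict_mono v"
  shows "\<exists>H. bij_betw H (\<Union>k\<in>K. {u k..<u (k+1)}) (\<Union>k\<in>K. {v k..<v (k+1)})
             \<and> strict_mono_on (\<Union>k\<in>K. {u k..<u (k+1)}) H"
proof -
  define P where "P = (\<lambda>k. if k \<in> K then {u k..<u (k+1)} else {})"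
  define Q where "Q = (\<lambda>k. if k \<in> K then {v k..<v (k+1)} else {})"
  have uk: "u k < u (k+1)" "v k < v (k+1)" for k using u v by (simp_all add: strict_mono_def)
  have "\<forall>k. \<exists>\<phi>. bij_betw \<phi> {u k..<u (k+1)} {v k..<v (k+1)} \<and> strict_mono_on {u k..<u (k+1)} \<phi>"
    using affine_iso[OF uk(1) uk(2)] by blast
  then obtain \<phi> where phi: "\<And>k. bij_betw (\<phi> k) {u k..<u (k+1)} {v k..<v (k+1)} \<and> strict_mono_on {u k..<u (k+1)} (\<phi> k)"
    by metis
  have hb: "bij_betw (\<phi> k) (P k) (Q k)" "strict_mono_on (P k) (\<phi> k)" for k
    using phi[of k] by (auto simp: P_def Q_def bij_betw_def strict_mono_on_def)
  have ord: "lt_set (P i) (P j) \<and> lt_set (Q i) (Q j)" if "i < j" for i j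
  proof -
    have "i + 1 \<le> j" using that by simp
    then have "u (i+1) \<le> u j" "v (i+1) \<le> v j" using u v by (simp_all add: strict_mono_less_eq)
    then show ?thesis by (auto simp: lt_set_def P_def Q_def)
  qed
  have tot: "i \<noteq> j \<Longrightarrow> i < j \<or> j < i" for i j :: int by auto
  obtain H where H: "bij_betw H (\<Union>i. P i) (\<Union>i. Q i) \<and> strict_mono_on (\<Union>i. P i) H"
    using piecewise_iso[of "(<)" P Q \<phi>, OF ord tot hb] by blast
  have "(\<Union>i. P i) = (\<Union>k\<in>K. {u k..<u (k+1)})" "(\<Union>i. Q i) = (\<Union>k\<in>K. {v k..<v (k+1)})"
    by (auto simp: P_def Q_def split: if_splits)
  then show ?thesis using H by auto
qed

lemma cofinal_seq:
  fixes C :: "rat set"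
  assumes p: "p \<in> C" and nm: "\<And>x. x \<in> C \<Longrightarrow> \<exists>y\<in>C. x < y"
  shows "\<exists>s::nat\<Rightarrow>rat. s 0 = p \<and> (\<forall>n. s n < s (Suc n)) \<and> (\<forall>n. s n \<in> C) \<and> (\<forall>x\<in>C. \<exists>n. x < s n)"
proof -
  define e where "e = nat_to_rat_surj"
  define nxt where "nxt = (\<lambda>n z. SOME y. y \<in> C \<and> z < y \<and> (e n \<in> C \<longrightarrow> e n < y))"
  define s where "s = rec_nat p nxt"
  have s0: "s 0 = p" and sS: "s (Suc n) = nxt n (s n)" for n by (simp_all add: s_def)
  have ex: "\<exists>y. y \<in> C \<and> z < y \<and> (e n \<in> C \<longrightarrow> e n < y)" if "z \<in> C" for z n
  proof (cases "e n \<in> C")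
    case True
    have "max z (e n) \<in> C" using True that by (simp add: max_def)
    then obtain y where "y \<in> C" "max z (e n) < y" using nm by blast
    then show ?thesis by auto
  next
    case False
    then show ?thesis using nm[OF that] by auto
  qed
  have sC: "s n \<in> C \<and> s n < s (Suc n) \<and> (e n \<in> C \<longrightarrow> e n < s (Suc n))" for n
  proof (induct n)
    case 0
    show ?case unfolding sS s0 nxt_def using someI_ex[OF ex[OF p, of 0]] p by simp
  next
    case (Suc n)
    then have "s (Suc n) \<in> C" using someI_ex[OF ex[of "s n" n]] by (simp add: sS nxt_def)
    then show ?case using someI_ex[OF ex[of "s (Suc n)" "Suc n"]] by (simp add: sS[of "Suc n"] nxt_def)
  qed
  have cof: "\<exists>n. x < s n" if "x \<in> C" for x
  proof -
    obtain n where "x = e n" using surj_nat_to_rat_surj by (metis e_def surj_def)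
    then show ?thesis using sC[of n] that by blast
  qed
  show ?thesis using s0 sC cof by blast
qed

lemma bracket:
  fixes u :: "int \<Rightarrow> rat"
  assumes u: "strict_mono u" and "u i \<le> x" "x < u j"
  shows "\<exists>k. i \<le> k \<and> k < j \<and> u k \<le> x \<and> x < u (k+1)"
proof -
  have "i < j" using assms u by (metis le_less_trans not_less strict_mono_less)
  then obtain n where n: "j = i + 1 + int n" using zless_iff_Suc_zadd[of i j] by auto
  have "\<And>i. u i \<le> x \<Longrightarrow> x < u (i + 1 + int n) \<Longrightarrow> \<exists>k. i \<le> k \<and> k < i + 1 + int n \<and> u k \<le> x \<and> x < u (k+1)"
  proof (induct n)
    case 0 then show ?case by auto
  next
    case (Suc n)
    show ?case
    proof (cases "x < u (i+1)")
      case True then show ?thesis using Suc by auto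
    next
      case False
      then have "u (i+1) \<le> x" by simp
      from Suc(1)[OF this] Suc(3) obtain k where "i + 1 \<le> k \<and> k < i + 1 + 1 + int n \<and> u k \<le> x \<and> x < u (k+1)"
        by (auto simp: add.assoc)
      then show ?thesis by (intro exI[of _ k]) auto
    qed
  qed
  then show ?thesis using assms n by blast
qed

definition has_min :: "rat set \<Rightarrow> bool" where "has_min S \<longleftrightarrow> (\<exists>m\<in>S. \<forall>x\<in>S. m \<le> x)"
definition has_max :: "rat set \<Rightarrow> bool" where "has_max S \<longleftrightarrow> (\<exists>m\<in>S. \<forall>x\<in>S. x \<le> m)"
definition convex_q :: "rat set \<Rightarrow> bool" where
  "convex_q S \<longleftrightarrow> (\<forall>x\<in>S. \<forall>z\<in>S. \<forall>y. x \<le> y \<and> y \<le> z \<longrightarrow> y \<in> S)"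

lemma convex_qD: "convex_q S \<Longrightarrow> x \<in> S \<Longrightarrow> z \<in> S \<Longrightarrow> x \<le> y \<Longrightarrow> y \<le> z \<Longrightarrow> y \<in> S"
  unfolding convex_q_def by blast

lemma repr_nomax:
  fixes C :: "rat set"
  assumes cv: "convex_q C" and ne: "C \<noteq> {}" and nm0: "\<forall>x\<in>C. \<exists>y\<in>C. x < y"
  shows "\<exists>u::int\<Rightarrow>rat. strict_mono u \<and> C = (\<Union>k\<in>(if has_min C then {0..} else UNIV). {u k..<u (k+1)})"
proof -
  have nm: "\<And>x. x \<in> C \<Longrightarrow> \<exists>y\<in>C. x < y" using nm0 by blast
  show ?thesis
proof (cases "has_min C")
  case True
  then obtain m where m: "m \<in> C" "\<And>x. x \<in> C \<Longrightarrow> m \<le> x" by (auto simp: has_min_def)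
  obtain s where s: "s 0 = m" "\<And>n. s n < s (Suc n)" "\<And>n. s n \<in> C" "\<And>x. x \<in> C \<Longrightarrow> \<exists>n. x < s n"
    using cofinal_seq[OF m(1) nm] by blast
  define u where "u = (\<lambda>k::int. if k \<ge> 0 then s (nat k) else m + of_int k)"
  have um: "strict_mono u"
  proof (rule strict_mono_int_step)
    fix k :: int
    show "u k < u (k+1)"
    proof (cases "k \<ge> 0")
      case True
      then have "nat (k+1) = Suc (nat k)" by simp
      then show ?thesis using True s(2) by (simp add: u_def)
    next
      case False
      then show ?thesis using s(1) by (auto simp: u_def)
    qed
  qed
  have "C = (\<Union>k\<in>{0..}. {u k..<u (k+1)})"
  proof
    show "C \<subseteq> (\<Union>k\<in>{0..}. {u k..<u (k+1)})"
    proof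
      fix x assume x: "x \<in> C"
      obtain n where n: "x < s n" using s(4)[OF x] by blast
      have "u 0 \<le> x" using m(2)[OF x] s(1) by (simp add: u_def)
      moreover have "x < u (int n)" using n by (simp add: u_def)
      ultimately obtain k where "0 \<le> k" "u k \<le> x" "x < u (k+1)" using bracket[OF um] by blast
      then show "x \<in> (\<Union>k\<in>{0..}. {u k..<u (k+1)})" by auto
    qed
    show "(\<Union>k\<in>{0..}. {u k..<u (k+1)}) \<subseteq> C"
    proof
      fix x assume "x \<in> (\<Union>k\<in>{0..}. {u k..<u (k+1)})"
      then obtain k where k: "k \<ge> 0" "u k \<le> x" "x < u (k+1)" by auto
      have "u k \<in> C" "u (k+1) \<in> C" using k(1) s(3) by (auto simp: u_def)
      then show "x \<in> C" using convex_qD[OF cv] k by (meson less_imp_le)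
    qed
  qed
  then show ?thesis using um True by auto
next
  case False
  obtain p where p: "p \<in> C" using ne by blast
  obtain s where s: "s 0 = p" "\<And>n. s n < s (Suc n)" "\<And>n. s n \<in> C" "\<And>x. x \<in> C \<Longrightarrow> \<exists>n. x < s n"
    using cofinal_seq[OF p nm] by blast
  have nmin: "\<exists>y\<in>C. y < x" if "x \<in> C" for x using False that by (auto simp: has_min_def not_le)
  have nm2: "\<exists>y\<in>uminus ` C. x < y" if "x \<in> uminus ` C" for x
  proof -
    have "-x \<in> C" using that by auto
    then obtain y where "y \<in> C" "y < - x" using nmin by blast
    then have "-y \<in> uminus ` C" "x < -y" by auto
    then show ?thesis by blast
  qed
  obtain t where t: "t 0 = -p" "\<And>n. t n < t (Suc n)" "\<And>n. t n \<in> uminus ` C" "\<And>x. x \<in> uminus ` C \<Longrightarrow> \<exists>n. x < t n"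
    using cofinal_seq[of "-p" "uminus ` C", OF _ nm2] p by blast
  define u where "u = (\<lambda>k::int. if k \<ge> 0 then s (nat k) else - t (nat (-k)))"
  have um: "strict_mono u"
  proof (rule strict_mono_int_step)
    fix k :: int
    show "u k < u (k+1)"
    proof (cases "k \<ge> 0")
      case True
      then have "nat (k+1) = Suc (nat k)" by simp
      then show ?thesis using True s(2) by (simp add: u_def)
    next
      case False
      show ?thesis
      proof (cases "k = -1")
        case True then show ?thesis using s(1) t(1) t(2)[of 0] by (simp add: u_def)
      next
        case False2: False
        then have "nat (-k) = Suc (nat (-(k+1)))" using False by simp
        then show ?thesis using False False2 t(2)[of "nat (-(k+1))"] by (simp add: u_def)
      qed
    qed
  qed
  have tC: "- t n \<in> C" for n using t(3)[of n] by auto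
  have uC: "u k \<in> C" for k using s(3) tC by (simp add: u_def)
  have "C = (\<Union>k\<in>UNIV. {u k..<u (k+1)})"
  proof
    show "C \<subseteq> (\<Union>k\<in>UNIV. {u k..<u (k+1)})"
    proof
      fix x assume x: "x \<in> C"
      obtain n where n: "x < s n" using s(4)[OF x] by blast
      obtain n' where n': "-x < t n'" using t(4)[of "-x"] x by auto
      have "u (- int n') \<le> x" using n' s(1) t(1) by (cases "n' = 0") (auto simp: u_def)
      moreover have "x < u (int n)" using n by (simp add: u_def)
      ultimately obtain k where "u k \<le> x" "x < u (k+1)" using bracket[OF um] by blast
      then show "x \<in> (\<Union>k\<in>UNIV. {u k..<u (k+1)})" by auto
    qed
    show "(\<Union>k\<in>UNIV. {u k..<u (k+1)}) \<subseteq> C"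
    proof
      fix x assume "x \<in> (\<Union>k\<in>UNIV. {u k..<u (k+1)})"
      then obtain k where k: "u k \<le> x" "x < u (k+1)" by auto
      then show "x \<in> C" using convex_qD[OF cv uC uC] by (meson less_imp_le)
    qed
  qed
  then show ?thesis using um False by auto
qed
qed

lemma iso_nomax:
  fixes C D :: "rat set"
  assumes cC: "convex_q C" and nC: "C \<noteq> {}" and mC: "\<forall>x\<in>C. \<exists>y\<in>C. x < y"
    and cD: "convex_q D" and nD: "D \<noteq> {}" and mD: "\<forall>x\<in>D. \<exists>y\<in>D. x < y"
    and mn: "has_min C \<longleftrightarrow> has_min D"
  shows "\<exists>H. bij_betw H C D \<and> strict_mono_on C H"
proof -
  obtain u :: "int \<Rightarrow> rat" where u: "strict_mono u" "C = (\<Union>k\<in>(if has_min C then {0..} else UNIV). {u k..<u (k+1)})"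
    using repr_nomax[OF cC nC mC] by blast
  obtain v :: "int \<Rightarrow> rat" where v: "strict_mono v" "D = (\<Union>k\<in>(if has_min D then {0..} else UNIV). {v k..<v (k+1)})"
    using repr_nomax[OF cD nD mD] by blast
  define K where "K = (if has_min C then {0..} else (UNIV::int set))"
  have CK: "C = (\<Union>k\<in>K. {u k..<u (k+1)})" unfolding K_def by (rule u(2))
  have DK: "D = (\<Union>k\<in>K. {v k..<v (k+1)})" unfolding K_def mn by (rule v(2))
  obtain H where "bij_betw H (\<Union>k\<in>K. {u k..<u (k+1)}) (\<Union>k\<in>K. {v k..<v (k+1)})
             \<and> strict_mono_on (\<Union>k\<in>K. {u k..<u (k+1)}) H"
    using zseq_iso[OF u(1) v(1), of K] by blast
  then show ?thesis by (simp only: CK[symmetric] DK[symmetric]) blast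
qed

lemma iso_convex:
  fixes C D :: "rat set"
  assumes cC: "convex_q C" and tC: "\<exists>x\<in>C. \<exists>y\<in>C. x < y"
    and cD: "convex_q D" and tD: "\<exists>x\<in>D. \<exists>y\<in>D. x < y"
    and mn: "has_min C \<longleftrightarrow> has_min D" and mx: "has_max C \<longleftrightarrow> has_max D"
  shows "\<exists>H. bij_betw H C D \<and> strict_mono_on C H"
proof (cases "has_max C")
  case False
  then have "\<forall>x\<in>C. \<exists>y\<in>C. x < y" by (auto simp: has_max_def not_le)
  moreover have "\<not> has_max D" using False mx by simp
  then have "\<forall>x\<in>D. \<exists>y\<in>D. x < y" by (auto simp: has_max_def not_le)
  ultimately show ?thesis using iso_nomax[OF cC _ _ cD _ _ mn] tC tD by blast
next
  case True
  have key: "convex_q (S - {M}) \<and> S - {M} \<noteq> {} \<and> (\<forall>x\<in>S - {M}. \<exists>y\<in>S - {M}. x < y)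
       \<and> (has_min (S - {M}) \<longleftrightarrow> has_min S) \<and> S = (S - {M}) \<union> {M} \<and> lt_set (S - {M}) {M}"
    if cS: "convex_q S" and tS: "\<exists>x\<in>S. \<exists>y\<in>S. x < y" and M: "M \<in> S" "\<And>x. x \<in> S \<Longrightarrow> x \<le> M" for S M
  proof -
    have c1: "convex_q (S - {M})" unfolding convex_q_def
    proof (intro ballI allI impI)
      fix x z y assume xz: "x \<in> S - {M}" "z \<in> S - {M}" "x \<le> y \<and> y \<le> z"
      have "y \<in> S" using convex_qD[OF cS] xz by blast
      moreover have "z < M" using xz M by force
      ultimately show "y \<in> S - {M}" using xz by auto
    qed
    obtain x where x: "x \<in> S" "x < M" using tS M by (meson le_less_trans not_le)
    have ne: "S - {M} \<noteq> {}" using x by auto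
    have nm: "\<forall>x\<in>S - {M}. \<exists>y\<in>S - {M}. x < y"
    proof
      fix z assume z: "z \<in> S - {M}"
      then have zM: "z < M" using M by force
      have lt: "z < (z + M)/2" "(z+M)/2 < M" using zM by (simp_all add: field_simps)
      have "(z + M) / 2 \<in> S" using convex_qD[OF cS _ M(1)] z lt by (meson DiffD1 less_imp_le)
      moreover note lt
      ultimately show "\<exists>y\<in>S - {M}. z < y" by (intro bexI[of _ "(z+M)/2"]) auto
    qed
    have hm: "has_min (S - {M}) \<longleftrightarrow> has_min S"
    proof
      assume "has_min (S - {M})"
      then obtain m where m: "m \<in> S - {M}" "\<forall>y\<in>S - {M}. m \<le> y" by (auto simp: has_min_def)
      have "\<forall>y\<in>S. m \<le> y"
      proof
        fix y assume "y \<in> S"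
        then show "m \<le> y" using m M(2)[of m] by (cases "y = M") auto
      qed
      then show "has_min S" using m by (auto simp: has_min_def)
    next
      assume "has_min S"
      then obtain m where m: "m \<in> S" "\<forall>y\<in>S. m \<le> y" by (auto simp: has_min_def)
      have "m \<le> x" using m x by blast
      then have "m \<noteq> M" using x by auto
      then show "has_min (S - {M})" using m by (auto simp: has_min_def)
    qed
    have "lt_set (S - {M}) {M}" using M by (force simp: lt_set_def)
    then show ?thesis using c1 ne nm hm M by auto
  qed
  obtain M where M: "M \<in> C" "\<And>x. x \<in> C \<Longrightarrow> x \<le> M" using True by (auto simp: has_max_def)
  obtain M' where M': "M' \<in> D" "\<And>x. x \<in> D \<Longrightarrow> x \<le> M'" using True mx by (auto simp: has_max_def)
  note kC = key[OF cC tC M] and kD = key[OF cD tD M']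
  obtain H0 where H0: "bij_betw H0 (C - {M}) (D - {M'})" "strict_mono_on (C - {M}) H0"
    using iso_nomax[of "C - {M}" "D - {M'}"] kC kD mn by blast
  define P where "P = (\<lambda>b::bool. if b then {M} else C - {M})"
  define Q where "Q = (\<lambda>b::bool. if b then {M'} else D - {M'})"
  define h where "h = (\<lambda>b::bool. if b then (\<lambda>_. M') else H0)"
  have ord: "lt_set (P i) (P j) \<and> lt_set (Q i) (Q j)" if "\<not> i \<and> j" for i j
    using that kC kD by (simp add: P_def Q_def)
  have tot: "i \<noteq> j \<Longrightarrow> (\<not> i \<and> j) \<or> (\<not> j \<and> i)" for i j :: bool by auto
  have hb: "bij_betw (h i) (P i) (Q i)" "strict_mono_on (P i) (h i)" for i
    using H0 by (auto simp: P_def Q_def h_def bij_betw_def strict_mono_on_def)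
  obtain H where "bij_betw H (\<Union>i. P i) (\<Union>i. Q i) \<and> strict_mono_on (\<Union>i. P i) H"
    using piecewise_iso[of "\<lambda>i j. \<not> i \<and> j" P Q h, OF ord tot hb] by blast
  moreover have "(\<Union>i. P i) = C" "(\<Union>i. Q i) = D"
  proof -
    have "(\<Union>i. P i) = P False \<union> P True" "(\<Union>i. Q i) = Q False \<union> Q True" by (auto simp: UNIV_bool)
    then show "(\<Union>i. P i) = C" "(\<Union>i. Q i) = D" using kC kD by (simp_all add: P_def Q_def)
  qed
  ultimately show ?thesis by auto
qed


lemma ipow_image_interval:
  assumes f: "f \<in> AutQ" shows "ipow f n ` {x..<y} = {ipow f n x..<ipow f n y}"
proof
  show "ipow f n ` {x..<y} \<subseteq> {ipow f n x..<ipow f n y}"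
    using ipow_mono_iff[OF f] ipow_less_iff[OF f] by auto
  show "{ipow f n x..<ipow f n y} \<subseteq> ipow f n ` {x..<y}"
  proof
    fix z assume z: "z \<in> {ipow f n x..<ipow f n y}"
    have bf: "bij f" using f AutQ_D by blast
    have e: "ipow f n (ipow f (-n) z) = z" using ipow_inv_cancel2[OF bf] by simp
    have "ipow f (-n) z \<in> {x..<y}" using z e ipow_mono_iff[OF f, of n x "ipow f (-n) z"]
        ipow_less_iff[OF f, of n "ipow f (-n) z" y] by auto
    then show "z \<in> ipow f n ` {x..<y}" using e by (metis image_eqI)
  qed
qed

lemma inv_ipow:
  assumes bf: "bij f" shows "ipow (inv f) n = ipow f (-n)"
proof -
  have "inv (inv f) = f" using bf by (simp add: inv_inv_eq)
  then show ?thesis by (auto simp: ipow_def)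
qed

lemma orb_inv: "f \<in> AutQ \<Longrightarrow> orbital_at (inv f) a = orbital_at f a"
  using inv_ipow[of f] AutQ_D[of f] unfolding orbital_at_def
  by auto (metis minus_minus)+

lemma bump_up:
  assumes f: "f \<in> AutQ" and a: "a < f a" and b: "b < f b"
  shows "\<exists>H. bij_betw H (orbital_at f a) (orbital_at f b) \<and> strict_mono_on (orbital_at f a) H
          \<and> (\<forall>x\<in>orbital_at f a. H (f x) = f (H x))"
proof -
  have bf: "bij f" using f AutQ_D by blast
  define w where "w = (\<lambda>k. ipow f k a)"
  define z where "z = (\<lambda>k. ipow f k b)"
  have wS: "w (k+1) = f (w k)" "z (k+1) = f (z k)" for k
    by (simp_all add: w_def z_def ipow_succ[OF bf])
  have wS2: "w (k+1) = ipow f k (f a)" "z (k+1) = ipow f k (f b)" for k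
    using ipow_add_app[OF bf, of k 1] ipow_1[OF bf] by (simp_all add: w_def z_def)
  have wm: "strict_mono w" "strict_mono z"
    using wS2 ipow_less_iff[OF f] a b by (auto intro!: strict_mono_int_step simp: w_def z_def)
  obtain \<phi> where phi: "bij_betw \<phi> {a..<f a} {b..<f b}" "strict_mono_on {a..<f a} \<phi>"
    using affine_iso[OF a b] by blast
  define P where "P = (\<lambda>k. {w k..<w (k+1)})"
  define Q where "Q = (\<lambda>k. {z k..<z (k+1)})"
  define h where "h = (\<lambda>k. ipow f k \<circ> \<phi> \<circ> ipow f (-k))"
  have Pimg: "ipow f (-k) ` P k = {a..<f a}" for k
  proof -
    have "ipow f (-k) (w k) = a" "ipow f (-k) (w (k+1)) = f a"
      using ipow_inv_cancel[OF bf] wS2 by (simp_all add: w_def)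
    then show ?thesis using ipow_image_interval[OF f] by (simp add: P_def)
  qed
  have Qimg: "ipow f k ` {b..<f b} = Q k" for k
    using ipow_image_interval[OF f] wS2 by (simp add: Q_def z_def)
  have hb: "bij_betw (h k) (P k) (Q k)" for k
  proof -
    have 1: "bij_betw (ipow f (-k)) (P k) {a..<f a}"
      using Pimg bij_ipow[OF bf] by (metis bij_betw_subset bij_is_inj bij_betw_def inj_on_subset subset_UNIV)
    have 3: "bij_betw (ipow f k) {b..<f b} (Q k)"
      using Qimg bij_ipow[OF bf] by (metis bij_betw_def bij_is_inj inj_on_subset subset_UNIV)
    show ?thesis unfolding h_def using bij_betw_trans[OF bij_betw_trans[OF 1 phi(1)] 3] by (simp add: comp_assoc)
  qed
  have hm: "strict_mono_on (P k) (h k)" for k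
  proof (rule strict_mono_onI)
    fix r s assume rs: "r \<in> P k" "s \<in> P k" "r < s"
    have "ipow f (-k) r \<in> {a..<f a}" "ipow f (-k) s \<in> {a..<f a}" using Pimg rs by blast+
    moreover have "ipow f (-k) r < ipow f (-k) s" using rs ipow_less_iff[OF f] by blast
    ultimately have "\<phi> (ipow f (-k) r) < \<phi> (ipow f (-k) s)" using phi(2) by (simp add: strict_mono_onD)
    then show "h k r < h k s" using ipow_less_iff[OF f] by (simp add: h_def)
  qed
  have ord: "lt_set (P i) (P j) \<and> lt_set (Q i) (Q j)" if "i < j" for i j
  proof -
    have "i + 1 \<le> j" using that by simp
    then have "w (i+1) \<le> w j" "z (i+1) \<le> z j" using wm by (simp_all add: strict_mono_less_eq)
    then show ?thesis by (auto simp: lt_set_def P_def Q_def)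
  qed
  have tot: "i \<noteq> j \<Longrightarrow> i < j \<or> j < i" for i j :: int by auto
  obtain H where H: "bij_betw H (\<Union>i. P i) (\<Union>i. Q i)" "strict_mono_on (\<Union>i. P i) H"
    "\<And>i x. x \<in> P i \<Longrightarrow> H x = h i x"
    using piecewise_iso[of "(<)" P Q h, OF ord tot hb hm] by blast
  have cover: "orbital_at f c = (\<Union>k. {ipow f k c..<ipow f (k+1) c})" if sm: "strict_mono (\<lambda>k. ipow f k c)" for c
  proof
    show "orbital_at f c \<subseteq> (\<Union>k. {ipow f k c..<ipow f (k+1) c})"
    proof
      fix x assume "x \<in> orbital_at f c"
      then obtain m n where mn: "ipow f m c \<le> x" "x \<le> ipow f n c" by (auto simp: orbital_at_def)
      have "ipow f n c < ipow f (n+1) c" using sm by (simp add: strict_mono_def)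
      then obtain k where "ipow f k c \<le> x" "x < ipow f (k+1) c"
        using bracket[OF sm, of m x "n+1"] mn by auto
      then show "x \<in> (\<Union>k. {ipow f k c..<ipow f (k+1) c})" by auto
    qed
    show "(\<Union>k. {ipow f k c..<ipow f (k+1) c}) \<subseteq> orbital_at f c"
    proof
      fix x assume "x \<in> (\<Union>k. {ipow f k c..<ipow f (k+1) c})"
      then obtain k where "ipow f k c \<le> x" "x \<le> ipow f (k+1) c" by auto
      then show "x \<in> orbital_at f c" unfolding orbital_at_def by blast
    qed
  qed
  have UP: "(\<Union>i. P i) = orbital_at f a" using cover[of a] wm(1) by (simp add: P_def w_def)
  have UQ: "(\<Union>i. Q i) = orbital_at f b" using cover[of b] wm(2) by (simp add: Q_def z_def)
  have conj: "H (f x) = f (H x)" if x: "x \<in> orbital_at f a" for x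
  proof -
    obtain k where k: "x \<in> P k" using x UP by blast
    have "f x \<in> P (k+1)" using k wS strict_mono_less[OF conjunct2[OF AutQ_D[OF f]]]
      strict_mono_less_eq[OF conjunct2[OF AutQ_D[OF f]]] by (auto simp: P_def)
    then have "H (f x) = h (k+1) (f x)" using H(3) by blast
    also have "\<dots> = ipow f (k+1) (\<phi> (ipow f (-(k+1)) (f x)))" by (simp add: h_def)
    also have "ipow f (-(k+1)) (f x) = ipow f (-k) x"
      using ipow_add_app[OF bf, of "-(k+1)" 1 x] ipow_1[OF bf] by simp
    also have "ipow f (k+1) (\<phi> (ipow f (-k) x)) = f (h k x)" by (simp add: h_def ipow_succ[OF bf])
    also have "\<dots> = f (H x)" using H(3) k by simp
    finally show ?thesis .
  qed
  show ?thesis using H UP UQ conj by auto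
qed

lemma bump_conj:
  assumes f: "f \<in> AutQ" and a: "f a \<noteq> a" and b: "f b \<noteq> b" and d: "a < f a \<longleftrightarrow> b < f b"
  shows "\<exists>H. bij_betw H (orbital_at f a) (orbital_at f b) \<and> strict_mono_on (orbital_at f a) H
          \<and> (\<forall>x\<in>orbital_at f a. H (f x) = f (H x))"
proof (cases "a < f a")
  case True
  then show ?thesis using bump_up[OF f True] d by blast
next
  case False
  have bf: "bij f" using f AutQ_D by blast
  have fi: "inv f \<in> AutQ" using inv_AutQ[OF f] .
  have ia: "a < inv f a"
  proof -
    have "f a < a" using False a by simp
    then have "inv f (f a) < inv f a" using strict_mono_less[OF conjunct2[OF AutQ_D[OF fi]]] by blast
    then show ?thesis using bf by (simp add: bij_is_inj)
  qed
  have ib: "b < inv f b"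
  proof -
    have "f b < b" using False d b by simp
    then have "inv f (f b) < inv f b" using strict_mono_less[OF conjunct2[OF AutQ_D[OF fi]]] by blast
    then show ?thesis using bf by (simp add: bij_is_inj)
  qed
  obtain H where H: "bij_betw H (orbital_at f a) (orbital_at f b)" "strict_mono_on (orbital_at f a) H"
    "\<forall>x\<in>orbital_at f a. H (inv f x) = inv f (H x)"
    using bump_up[OF fi ia ib] orb_inv[OF f] by auto
  have "H (f x) = f (H x)" if x: "x \<in> orbital_at f a" for x
  proof -
    have "f x \<in> orbital_at f a" using orb_inv_mem[OF f x] by blast
    then have "H (inv f (f x)) = inv f (H (f x))" using H(3) by blast
    then have "H x = inv f (H (f x))" using bf by (simp add: bij_is_inj)
    then show ?thesis using bf by (simp add: bij_is_surj surj_f_inv_f)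
  qed
  then show ?thesis using H by blast
qed


definition below :: "rat set \<Rightarrow> rat set" where "below S = {x. \<forall>y\<in>S. x < y}"
definition above :: "rat set \<Rightarrow> rat set" where "above S = {x. \<forall>y\<in>S. y < x}"

definition pc :: "(nat \<Rightarrow> rat set) \<Rightarrow> (nat \<Rightarrow> rat) \<Rightarrow> (nat \<times> nat) option \<Rightarrow> rat set" where
  "pc Ob c p = (case p of None \<Rightarrow> {x. \<forall>i. c i \<le> x}
     | Some (i, k) \<Rightarrow> (if k = 0 then {x. (i = 0 \<or> c (i-1) \<le> x) \<and> x \<in> below (Ob i)}
                      else if k = 1 then Ob i
                      else if k = 2 then {x. x \<in> above (Ob i) \<and> x < c i} else {}))"

definition ordI :: "(nat \<times> nat) option \<Rightarrow> (nat \<times> nat) option \<Rightarrow> bool" where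
  "ordI p q = (case (p, q) of (Some (i,k), Some (j,l)) \<Rightarrow> i < j \<or> (i = j \<and> k < l)
                | (Some _, None) \<Rightarrow> True | _ \<Rightarrow> False)"

lemma ordI_tot: "p \<noteq> q \<Longrightarrow> ordI p q \<or> ordI q p"
  by (cases p; cases q) (auto simp: ordI_def)

lemma convex_trich:
  assumes "convex_q S" shows "y \<in> S \<or> y \<in> below S \<or> y \<in> above S"
proof -
  { assume "y \<notin> below S" "y \<notin> above S"
    then obtain u v where "u \<in> S" "v \<in> S" "u \<le> y" "y \<le> v" by (auto simp: below_def above_def not_less)
    then have "y \<in> S" using convex_qD[OF assms] by blast }
  then show ?thesis by blast
qed

locale layout =
  fixes Ob :: "nat \<Rightarrow> rat set" and c :: "nat \<Rightarrow> rat"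
  assumes cvx: "\<And>i. convex_q (Ob i)" and ne: "\<And>i. Ob i \<noteq> {}"
    and c1: "\<And>i. c i \<in> above (Ob i)" and c2: "\<And>i. c i \<in> below (Ob (Suc i))"
begin

lemma c_step: "c i < c (Suc i)"
proof -
  obtain ob where "ob \<in> Ob (Suc i)" using ne by blast
  then show ?thesis using c1[of "Suc i"] c2[of i] by (auto simp: above_def below_def intro: less_trans)
qed

lemma c_mono: "strict_mono c"
  using c_step by (simp add: strict_mono_Suc_iff)

lemma pcS0: "pc Ob c (Some (i,0)) = {x. (i = 0 \<or> c (i-1) \<le> x) \<and> x \<in> below (Ob i)}"
  and pcS1: "pc Ob c (Some (i,Suc 0)) = Ob i"
  and pcS2: "pc Ob c (Some (i,2)) = {x. x \<in> above (Ob i) \<and> x < c i}"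
  and pcS3: "k > 2 \<Longrightarrow> pc Ob c (Some (i,k)) = {}"
  by (simp_all add: pc_def)

lemma k_cases: obtains "k = 0" | "k = Suc 0" | "k = 2" | "k > (2::nat)" by linarith

lemma A1: "x \<in> pc Ob c (Some (i,k)) \<Longrightarrow> x < c i"
proof -
  assume x: "x \<in> pc Ob c (Some (i,k))"
  obtain ob where ob: "ob \<in> Ob i" using ne by blast
  have co: "ob < c i" using c1[of i] ob by (auto simp: above_def)
  show ?thesis
  proof (cases k rule: k_cases)
    case 1
    then have "x < ob" using x ob by (auto simp: pcS0 below_def)
    then show ?thesis using co by simp
  next
    case 2 then show ?thesis using x c1[of i] by (auto simp: pcS1 above_def)
  next
    case 3 then show ?thesis using x by (simp add: pcS2)
  next
    case 4 then show ?thesis using x by (simp add: pcS3)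
  qed
qed

lemma A2: "x \<in> pc Ob c (Some (i,k)) \<Longrightarrow> 0 < i \<Longrightarrow> c (i-1) \<le> x"
proof -
  assume x: "x \<in> pc Ob c (Some (i,k))" and i: "0 < i"
  obtain ob where ob: "ob \<in> Ob i" using ne by blast
  have co: "c (i-1) < ob" using c2[of "i-1"] ob i by (auto simp: below_def)
  show ?thesis
  proof (cases k rule: k_cases)
    case 1 then show ?thesis using x i by (simp add: pcS0)
  next
    case 2
    then have "x \<in> Ob i" using x by (simp add: pcS1)
    then have "c (i-1) < x" using c2[of "i-1"] i by (auto simp: below_def)
    then show ?thesis by simp
  next
    case 3
    then have "ob < x" using x ob by (auto simp: pcS2 above_def)
    then show ?thesis using co by simp
  next
    case 4 then show ?thesis using x by (simp add: pcS3)
  qed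
qed

lemma pcN: "pc Ob c None = {x. \<forall>i. c i \<le> x}" by (simp add: pc_def)

lemma pc_ord: "ordI p q \<Longrightarrow> lt_set (pc Ob c p) (pc Ob c q)"
proof -
  assume pq: "ordI p q"
  obtain i k where p: "p = Some (i,k)" using pq by (cases p) (auto simp: ordI_def)
  show ?thesis
  proof (cases q)
    case None
    show ?thesis unfolding lt_set_def
    proof (intro ballI)
      fix x y assume "x \<in> pc Ob c p" "y \<in> pc Ob c q"
      then have "x < c i" "c i \<le> y" using A1 p None pcN by auto
      then show "x < y" by simp
    qed
  next
    case (Some q')
    then obtain j l where q: "q = Some (j,l)" by (cases q') auto
    show ?thesis
    proof (cases "i < j")
      case True
      show ?thesis unfolding lt_set_def
      proof (intro ballI)
        fix x y assume "x \<in> pc Ob c p" "y \<in> pc Ob c q"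
        then have "x < c i" "c (j-1) \<le> y" using A1 A2 p q True by auto
        moreover have "c i \<le> c (j-1)" using True c_mono by (simp add: strict_mono_less_eq)
        ultimately show "x < y" by simp
      qed
    next
      case False
      then have ij: "i = j" "k < l" using pq p q by (auto simp: ordI_def)
      obtain ob where ob: "ob \<in> Ob i" using ne by blast
      show ?thesis unfolding lt_set_def
      proof (intro ballI)
        fix x y assume xy: "x \<in> pc Ob c p" "y \<in> pc Ob c q"
        show "x < y"
        proof (cases l rule: k_cases)
          case 1 then show ?thesis using ij by simp
        next
          case 2
          then have "k = 0" using ij by simp
          then show ?thesis using xy p q ij 2 by (auto simp: pcS0 pcS1 below_def)
        next
          case 3
          then have yb: "y \<in> above (Ob i)" using xy q ij by (simp add: pcS2)
          show ?thesis
          proof (cases "k = 0")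
            case True
            then have "x < ob" using xy p ob by (auto simp: pcS0 below_def)
            moreover have "ob < y" using yb ob by (auto simp: above_def)
            ultimately show ?thesis by simp
          next
            case False
            then have "k = Suc 0" using ij 3 by simp
            then show ?thesis using xy p yb by (auto simp: pcS1 above_def)
          qed
        next
          case 4 then show ?thesis using xy q by (simp add: pcS3)
        qed
      qed
    qed
  qed
qed

lemma pc_cover: "\<exists>p. x \<in> pc Ob c p"
proof (cases "\<forall>i. c i \<le> x")
  case True then show ?thesis by (intro exI[of _ None]) (simp add: pcN)
next
  case False
  then obtain i where "x < c i" by (auto simp: not_le)
  define i0 where "i0 = (LEAST i. x < c i)"
  have i0: "x < c i0" using LeastI[of "\<lambda>i. x < c i"] \<open>x < c i\<close> by (simp add: i0_def)
  have lo: "i0 = 0 \<or> c (i0 - 1) \<le> x"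
  proof (cases "i0 = 0")
    case False
    then have "i0 - 1 < i0" by simp
    then have "\<not> x < c (i0 - 1)" using not_less_Least[of "i0-1" "\<lambda>i. x < c i"] by (simp add: i0_def)
    then show ?thesis by simp
  qed simp
  consider "x \<in> Ob i0" | "x \<in> below (Ob i0)" | "x \<in> above (Ob i0)" using convex_trich[OF cvx] by blast
  then show ?thesis
  proof cases
    case 1 then show ?thesis by (intro exI[of _ "Some (i0, Suc 0)"]) (simp add: pcS1)
  next
    case 2 then show ?thesis using lo by (intro exI[of _ "Some (i0, 0)"]) (simp add: pcS0)
  next
    case 3 then show ?thesis using i0 by (intro exI[of _ "Some (i0, 2)"]) (simp add: pcS2)
  qed
qed

lemma lt_set_disj: "lt_set A B \<Longrightarrow> A \<inter> B = {}"
  unfolding lt_set_def by blast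

lemma pc_disj: "p \<noteq> q \<Longrightarrow> pc Ob c p \<inter> pc Ob c q = {}"
proof -
  assume "p \<noteq> q"
  then have "lt_set (pc Ob c p) (pc Ob c q) \<or> lt_set (pc Ob c q) (pc Ob c p)" using ordI_tot pc_ord by blast
  then show ?thesis using lt_set_disj by blast
qed

lemma pc1: "pc Ob c (Some (i, 1)) = Ob i" by (simp add: pc_def)
lemma pc_big: "pc Ob c (Some (i, Suc (Suc (Suc k)))) = {}" by (simp add: pc_def)

lemma two_pts_nomin: "(x::rat) \<in> S \<Longrightarrow> (\<forall>y. y \<le> x \<longrightarrow> y \<in> S) \<Longrightarrow> \<exists>u\<in>S. \<exists>v\<in>S. u < v"
  by (rule bexI[of _ "x - 1"], rule bexI[of _ x]) auto

lemma below_mono: "x \<in> below A \<Longrightarrow> y \<le> x \<Longrightarrow> y \<in> below A"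
  unfolding below_def by (auto intro: le_less_trans)
lemma above_mono: "x \<in> above A \<Longrightarrow> x \<le> y \<Longrightarrow> y \<in> above A"
  unfolding above_def by (auto intro: less_le_trans)

lemma T0:
  assumes gapL: "\<And>i. \<exists>x. c i < x \<and> x \<in> below (Ob (Suc i))" and gap0: "\<exists>x. x \<in> below (Ob 0)"
  shows "convex_q (pc Ob c (Some (i,0)))" "\<exists>u\<in>pc Ob c (Some (i,0)). \<exists>v\<in>pc Ob c (Some (i,0)). u < v"
    "has_min (pc Ob c (Some (i,0))) \<longleftrightarrow> i \<noteq> 0"
    "has_max (pc Ob c (Some (i,0))) \<longleftrightarrow> has_max (below (Ob i))"
proof -
  let ?S = "pc Ob c (Some (i,0))"
  have S: "x \<in> ?S \<longleftrightarrow> (i = 0 \<or> c (i-1) \<le> x) \<and> x \<in> below (Ob i)" for x by (simp add: pcS0)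
  show "convex_q ?S" unfolding convex_q_def
  proof (intro ballI allI impI)
    fix x z y assume xz: "x \<in> ?S" "z \<in> ?S" "x \<le> y \<and> y \<le> z"
    have "y \<in> below (Ob i)" using xz S below_mono by blast
    moreover have "i = 0 \<or> c (i-1) \<le> y" using xz S by (meson order_trans)
    ultimately show "y \<in> ?S" using S by blast
  qed
  show "\<exists>u\<in>?S. \<exists>v\<in>?S. u < v"
  proof (cases i)
    case 0
    obtain x where x: "x \<in> below (Ob 0)" using gap0 by blast
    have "x - 1 \<in> below (Ob 0)" using below_mono[OF x] by simp
    then have "x - 1 \<in> ?S" "x \<in> ?S" using x S 0 by auto
    moreover have "x - 1 < x" by simp
    ultimately show ?thesis by blast
  next
    case (Suc j)
    obtain x where "c j < x" "x \<in> below (Ob (Suc j))" using gapL by blast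
    moreover have "c j \<in> below (Ob (Suc j))" using c2 by blast
    ultimately have "c j \<in> ?S" "x \<in> ?S" "c j < x" using Suc S by auto
    then show ?thesis by blast
  qed
  show "has_min ?S \<longleftrightarrow> i \<noteq> 0"
  proof (cases i)
    case 0
    have "\<not> has_min ?S"
    proof
      assume "has_min ?S"
      then obtain m where m: "m \<in> ?S" "\<And>x. x \<in> ?S \<Longrightarrow> m \<le> x" unfolding has_min_def by blast
      have "m \<in> below (Ob 0)" using m(1) S 0 by blast
      then have "m - 1 \<in> below (Ob 0)" using below_mono by simp
      then have "m - 1 \<in> ?S" using S 0 by blast
      then have "m \<le> m - 1" using m(2) by blast
      then show False by simp
    qed
    then show ?thesis using 0 by simp
  next
    case (Suc j)
    have "c j \<in> ?S" using Suc S c2 by simp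
    moreover have "\<forall>x\<in>?S. c j \<le> x" using Suc S by simp
    ultimately have "has_min ?S" unfolding has_min_def by blast
    then show ?thesis using Suc by simp
  qed
  show "has_max ?S \<longleftrightarrow> has_max (below (Ob i))"
  proof (cases i)
    case 0
    then have "?S = below (Ob i)" using S by blast
    then show ?thesis by simp
  next
    case (Suc j)
    have cj: "c j \<in> below (Ob i)" using c2 Suc by simp
    have S': "x \<in> ?S \<longleftrightarrow> c j \<le> x \<and> x \<in> below (Ob i)" for x using S Suc by simp
    show ?thesis
    proof
      assume "has_max ?S"
      then obtain M where M: "M \<in> ?S" "\<And>x. x \<in> ?S \<Longrightarrow> x \<le> M" unfolding has_max_def by blast
      have "\<forall>y\<in>below (Ob i). y \<le> M"
      proof
        fix y assume y: "y \<in> below (Ob i)"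
        show "y \<le> M"
        proof (cases "c j \<le> y")
          case True then show ?thesis using y M S' by blast
        next
          case False then have "y < c j" by simp
          moreover have "c j \<le> M" using M(1) S' by blast
          ultimately show ?thesis by simp
        qed
      qed
      moreover have "M \<in> below (Ob i)" using M(1) S' by blast
      ultimately show "has_max (below (Ob i))" unfolding has_max_def by blast
    next
      assume "has_max (below (Ob i))"
      then obtain M where M: "M \<in> below (Ob i)" "\<And>x. x \<in> below (Ob i) \<Longrightarrow> x \<le> M" unfolding has_max_def by blast
      have "c j \<le> M" using M cj by blast
      then have "M \<in> ?S" using M S' by blast
      moreover have "\<forall>x\<in>?S. x \<le> M" using M S' by blast
      ultimately show "has_max ?S" unfolding has_max_def by blast
    qed
  qed
qed

lemma T2:
  assumes gapR: "\<And>i. \<exists>x. x < c i \<and> x \<in> above (Ob i)"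
  shows "convex_q (pc Ob c (Some (i,2)))" "\<exists>u\<in>pc Ob c (Some (i,2)). \<exists>v\<in>pc Ob c (Some (i,2)). u < v"
    "has_min (pc Ob c (Some (i,2))) \<longleftrightarrow> has_min (above (Ob i))"
    "\<not> has_max (pc Ob c (Some (i,2)))"
proof -
  let ?S = "pc Ob c (Some (i,2))"
  have S: "x \<in> ?S \<longleftrightarrow> x \<in> above (Ob i) \<and> x < c i" for x by (simp add: pcS2)
  have mid: "(x + c i) / 2 \<in> ?S \<and> x < (x + c i)/2" if "x \<in> ?S" for x
  proof -
    have x: "x < c i" "x \<in> above (Ob i)" using that S by auto
    have 1: "x < (x + c i)/2" "(x + c i)/2 < c i" using x(1) by (simp_all add: field_simps)
    then have "(x + c i)/2 \<in> above (Ob i)" using above_mono[OF x(2)] by simp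
    then show ?thesis using 1 S by blast
  qed
  show "convex_q ?S" unfolding convex_q_def
  proof (intro ballI allI impI)
    fix x z y assume xz: "x \<in> ?S" "z \<in> ?S" "x \<le> y \<and> y \<le> z"
    have "y \<in> above (Ob i)" using xz S above_mono by blast
    moreover have "y < c i" using xz S by (meson le_less_trans)
    ultimately show "y \<in> ?S" using S by blast
  qed
  obtain x where x: "x < c i" "x \<in> above (Ob i)" using gapR by blast
  then have xS: "x \<in> ?S" using S by simp
  show "\<exists>u\<in>?S. \<exists>v\<in>?S. u < v" using xS mid[OF xS] by blast
  show "\<not> has_max ?S"
  proof
    assume "has_max ?S"
    then obtain M where M: "M \<in> ?S" "\<And>x. x \<in> ?S \<Longrightarrow> x \<le> M" unfolding has_max_def by blast
    have "(M + c i)/2 \<le> M" using M(2) mid[OF M(1)] by blast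
    then show False using mid[OF M(1)] by simp
  qed
  show "has_min ?S \<longleftrightarrow> has_min (above (Ob i))"
  proof
    assume "has_min ?S"
    then obtain m where m: "m \<in> ?S" "\<And>x. x \<in> ?S \<Longrightarrow> m \<le> x" unfolding has_min_def by blast
    have "\<forall>y\<in>above (Ob i). m \<le> y"
    proof
      fix y assume y: "y \<in> above (Ob i)"
      show "m \<le> y"
      proof (cases "y < c i")
        case True then show ?thesis using y m S by blast
      next
        case False
        moreover have "m < c i" using m(1) S by blast
        ultimately show ?thesis by simp
      qed
    qed
    moreover have "m \<in> above (Ob i)" using m(1) S by blast
    ultimately show "has_min (above (Ob i))" unfolding has_min_def by blast
  next
    assume "has_min (above (Ob i))"
    then obtain m where m: "m \<in> above (Ob i)" "\<And>x. x \<in> above (Ob i) \<Longrightarrow> m \<le> x" unfolding has_min_def by blast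
    have "m \<le> x" using m x by blast
    then have "m < c i" using x by simp
    then have "m \<in> ?S" using m S by blast
    moreover have "\<forall>y\<in>?S. m \<le> y" using m S by blast
    ultimately show "has_min ?S" unfolding has_min_def by blast
  qed
qed

end


lemma orb_convex_q: "convex_q (orbital_at f a)"
  unfolding convex_q_def using orb_convex by blast

lemma (in layout) not_in_orb: "p \<noteq> Some (j, Suc 0) \<Longrightarrow> x \<in> pc Ob c p \<Longrightarrow> x \<notin> Ob j"
  using pc_disj[of p "Some (j, Suc 0)"] pcS1[of j] by blast

lemma conj_incr:
  fixes f :: "rat \<Rightarrow> rat" and a c :: "nat \<Rightarrow> rat"
  assumes f: "f \<in> AutQ"
    and mv: "\<And>i. f (a i) \<noteq> a i"
    and dir: "\<And>i. (a i < f (a i)) \<longleftrightarrow> (a 0 < f (a 0))"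
    and lo: "\<And>i. has_max (below (orbital_at f (a i))) \<longleftrightarrow> has_max (below (orbital_at f (a 0)))"
    and hi: "\<And>i. has_min (above (orbital_at f (a i))) \<longleftrightarrow> has_min (above (orbital_at f (a 0)))"
    and c1: "\<And>i. c i \<in> above (orbital_at f (a i))"
    and c2: "\<And>i. c i \<in> below (orbital_at f (a (Suc i)))"
    and gapL: "\<And>i. \<exists>x. c i < x \<and> x \<in> below (orbital_at f (a (Suc i)))"
    and gapR: "\<And>i. \<exists>x. x < c i \<and> x \<in> above (orbital_at f (a i))"
    and gap0: "\<exists>x. x \<in> below (orbital_at f (a 0))"
  shows "\<exists>h\<in>AutQ. h \<circ> restr f (\<Union>i. orbital_at f (a (Suc i))) = restr f (\<Union>i. orbital_at f (a i)) \<circ> h"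
proof -
  define Ob where "Ob = (\<lambda>i. orbital_at f (a i))"
  define ObP where "ObP = (\<lambda>i. Ob (Suc i))"
  define cP where "cP = (\<lambda>i. c (Suc i))"
  define S where "S = (\<Union>i. Ob i)"
  define S2 where "S2 = (\<Union>i. ObP i)"
  define g where "g = restr f S"
  define g2 where "g2 = restr f S2"
  interpret Q: layout Ob c
    by unfold_locales (auto simp: Ob_def orb_convex_q c1 c2 intro: orb_refl)
  interpret P: layout ObP cP
    by unfold_locales (auto simp: ObP_def cP_def Ob_def orb_convex_q c1 c2 intro: orb_refl)
  have PgapL: "\<And>i. \<exists>x. cP i < x \<and> x \<in> below (ObP (Suc i))" using gapL by (simp add: cP_def ObP_def Ob_def)
  have Pgap0: "\<exists>x. x \<in> below (ObP 0)" using c2[of 0] by (auto simp: ObP_def Ob_def)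
  have PgapR: "\<And>i. \<exists>x. x < cP i \<and> x \<in> above (ObP i)" using gapR by (simp add: cP_def ObP_def Ob_def)
  have QgapL: "\<And>i. \<exists>x. c i < x \<and> x \<in> below (Ob (Suc i))" using gapL by (simp add: Ob_def)
  have Qgap0: "\<exists>x. x \<in> below (Ob 0)" using gap0 by (simp add: Ob_def)
  have QgapR: "\<And>i. \<exists>x. x < c i \<and> x \<in> above (Ob i)" using gapR by (simp add: Ob_def)
  have loP: "has_max (below (ObP i)) \<longleftrightarrow> has_max (below (Ob i))" for i
    using lo[of i] lo[of "Suc i"] by (simp add: ObP_def Ob_def)
  have hiP: "has_min (above (ObP i)) \<longleftrightarrow> has_min (above (Ob i))" for i
    using hi[of i] hi[of "Suc i"] by (simp add: ObP_def Ob_def)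
  have g2_out: "g2 x = x" if "\<And>j. p \<noteq> Some (j, Suc 0)" "x \<in> pc ObP cP p" for p x
  proof -
    have "x \<notin> S2"
    proof
      assume "x \<in> S2"
      then obtain j where "x \<in> ObP j" by (auto simp: S2_def)
      then show False using P.not_in_orb[OF that(1) that(2)] by blast
    qed
    then show ?thesis by (simp add: g2_def restr_def)
  qed
  have g_out: "g y = y" if "\<And>j. p \<noteq> Some (j, Suc 0)" "y \<in> pc Ob c p" for p y
  proof -
    have "y \<notin> S"
    proof
      assume "y \<in> S"
      then obtain j where "y \<in> Ob j" by (auto simp: S_def)
      then show False using Q.not_in_orb[OF that(1) that(2)] by blast
    qed
    then show ?thesis by (simp add: g_def restr_def)
  qed
  have piece: "\<exists>hh. bij_betw hh (pc ObP cP p) (pc Ob c p) \<and> strict_mono_on (pc ObP cP p) hh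
                 \<and> (\<forall>x\<in>pc ObP cP p. g2 x \<in> pc ObP cP p \<and> hh (g2 x) = g (hh x))" for p
  proof (cases p)
    case None
    have c01: "c 0 < c (Suc 0)" using Q.c_step by blast
    have eq: "pc ObP cP None = pc Ob c None"
    proof -
      have "(\<forall>i. c (Suc i) \<le> x) \<longleftrightarrow> (\<forall>i. c i \<le> x)" for x
        using c01 by (metis less_imp_le not0_implies_Suc order_less_le_trans)
      then show ?thesis by (simp add: pc_def cP_def)
    qed
    have "\<forall>x\<in>pc ObP cP p. g2 x = x" using g2_out[of p] None by simp
    moreover have "\<forall>x\<in>pc Ob c p. g x = x" using g_out[of p] None by simp
    ultimately show ?thesis using None eq
      by (intro exI[of _ id]) (auto simp: bij_betw_def strict_mono_on_def)
  next
    case (Some q)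
    then obtain i k where p: "p = Some (i,k)" by (cases q) auto
    show ?thesis
    proof (cases k rule: Q.k_cases)
      case 1
      have ob: "convex_q (pc ObP cP p)" "\<exists>u\<in>pc ObP cP p. \<exists>v\<in>pc ObP cP p. u < v"
        "has_min (pc ObP cP p) \<longleftrightarrow> i \<noteq> 0" "has_max (pc ObP cP p) \<longleftrightarrow> has_max (below (ObP i))"
        using P.T0[OF PgapL Pgap0, of i] p 1 by auto
      have oa: "convex_q (pc Ob c p)" "\<exists>u\<in>pc Ob c p. \<exists>v\<in>pc Ob c p. u < v"
        "has_min (pc Ob c p) \<longleftrightarrow> i \<noteq> 0" "has_max (pc Ob c p) \<longleftrightarrow> has_max (below (Ob i))"
        using Q.T0[OF QgapL Qgap0, of i] p 1 by auto
      obtain hh where hh: "bij_betw hh (pc ObP cP p) (pc Ob c p)" "strict_mono_on (pc ObP cP p) hh"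
        using iso_convex[OF ob(1,2) oa(1,2)] ob(3,4) oa(3,4) loP by blast
      have "\<forall>x\<in>pc ObP cP p. g2 x \<in> pc ObP cP p \<and> hh (g2 x) = g (hh x)"
      proof
        fix x assume x: "x \<in> pc ObP cP p"
        have "hh x \<in> pc Ob c p" using hh(1) x by (auto simp: bij_betw_def)
        then show "g2 x \<in> pc ObP cP p \<and> hh (g2 x) = g (hh x)"
          using g2_out[of p x] g_out[of p "hh x"] x p 1 by simp
      qed
      then show ?thesis using hh by blast
    next
      case 2
      have pe: "pc ObP cP p = ObP i" "pc Ob c p = Ob i" using p 2 P.pcS1 Q.pcS1 by auto
      have d: "a (Suc i) < f (a (Suc i)) \<longleftrightarrow> a i < f (a i)" using dir[of i] dir[of "Suc i"] by simp
      obtain H where H: "bij_betw H (Ob (Suc i)) (Ob i)" "strict_mono_on (Ob (Suc i)) H"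
        "\<forall>x\<in>Ob (Suc i). H (f x) = f (H x)"
        using bump_conj[OF f mv mv d] by (auto simp: Ob_def)
      have "\<forall>x\<in>ObP i. g2 x \<in> ObP i \<and> H (g2 x) = g (H x)"
      proof
        fix x assume x: "x \<in> ObP i"
        have g2x: "g2 x = f x" using x by (auto simp: g2_def restr_def S2_def)
        have fx: "f x \<in> ObP i" using x orb_inv_mem[OF f] by (auto simp: ObP_def Ob_def)
        have "H x \<in> Ob i" using H(1) x by (auto simp: bij_betw_def ObP_def)
        then have "g (H x) = f (H x)" by (auto simp: g_def restr_def S_def)
        then show "g2 x \<in> ObP i \<and> H (g2 x) = g (H x)" using g2x fx H(3) x by (simp add: ObP_def)
      qed
      then show ?thesis using H pe by (intro exI[of _ H]) (simp add: ObP_def)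
    next
      case 3
      have ob: "convex_q (pc ObP cP p)" "\<exists>u\<in>pc ObP cP p. \<exists>v\<in>pc ObP cP p. u < v"
        "has_min (pc ObP cP p) \<longleftrightarrow> has_min (above (ObP i))" "\<not> has_max (pc ObP cP p)"
        using P.T2[OF PgapR, of i] p 3 by auto
      have oa: "convex_q (pc Ob c p)" "\<exists>u\<in>pc Ob c p. \<exists>v\<in>pc Ob c p. u < v"
        "has_min (pc Ob c p) \<longleftrightarrow> has_min (above (Ob i))" "\<not> has_max (pc Ob c p)"
        using Q.T2[OF QgapR, of i] p 3 by auto
      obtain hh where hh: "bij_betw hh (pc ObP cP p) (pc Ob c p)" "strict_mono_on (pc ObP cP p) hh"
        using iso_convex[OF ob(1,2) oa(1,2)] ob(3,4) oa(3,4) hiP by blast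
      have "\<forall>x\<in>pc ObP cP p. g2 x \<in> pc ObP cP p \<and> hh (g2 x) = g (hh x)"
      proof
        fix x assume x: "x \<in> pc ObP cP p"
        have "hh x \<in> pc Ob c p" using hh(1) x by (auto simp: bij_betw_def)
        then show "g2 x \<in> pc ObP cP p \<and> hh (g2 x) = g (hh x)"
          using g2_out[of p x] g_out[of p "hh x"] x p 3 by simp
      qed
      then show ?thesis using hh by blast
    next
      case 4
      then show ?thesis using p P.pcS3 Q.pcS3
        by (intro exI[of _ id]) (auto simp: bij_betw_def strict_mono_on_def)
    qed
  qed
  obtain hh where hh: "\<And>p. bij_betw (hh p) (pc ObP cP p) (pc Ob c p)" "\<And>p. strict_mono_on (pc ObP cP p) (hh p)"
    "\<And>p x. x \<in> pc ObP cP p \<Longrightarrow> g2 x \<in> pc ObP cP p \<and> hh p (g2 x) = g (hh p x)"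
    using piece by metis
  have ord: "ordI p q \<Longrightarrow> lt_set (pc ObP cP p) (pc ObP cP q) \<and> lt_set (pc Ob c p) (pc Ob c q)" for p q
    using P.pc_ord Q.pc_ord by blast
  obtain H where H: "bij_betw H (\<Union>p. pc ObP cP p) (\<Union>p. pc Ob c p)" "strict_mono_on (\<Union>p. pc ObP cP p) H"
    "\<forall>p. \<forall>x\<in>pc ObP cP p. H x = hh p x"
    using piecewise_iso[of ordI "pc ObP cP" "pc Ob c" hh, OF ord ordI_tot hh(1) hh(2)] by blast
  have U1: "(\<Union>p. pc ObP cP p) = UNIV" using P.pc_cover by blast
  have U2: "(\<Union>p. pc Ob c p) = UNIV" using Q.pc_cover by blast
  have HA: "H \<in> AutQ" using H(1,2) U1 U2 by (simp add: AutQ_def strict_mono_on_def strict_mono_def)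
  have "H (g2 x) = g (H x)" for x
  proof -
    obtain p where x: "x \<in> pc ObP cP p" using P.pc_cover by blast
    have "H (g2 x) = hh p (g2 x)" "H x = hh p x" using hh(3)[OF x] H(3) x by blast+
    then show ?thesis using hh(3)[OF x] by simp
  qed
  then have "H \<circ> g2 = g \<circ> H" by (simp add: fun_eq_iff)
  then show ?thesis using HA by (auto simp: g_def g2_def S_def S2_def ObP_def Ob_def)
qed


definition negs :: "rat set \<Rightarrow> rat set" where "negs A = {b. -b \<in> A}"

lemma negs_mem[simp]: "x \<in> negs A \<longleftrightarrow> -x \<in> A" by (simp add: negs_def)

lemma below_negs: "below (negs A) = negs (above A)"
proof (rule set_eqI)
  fix x :: rat
  have "(\<forall>y. -y \<in> A \<longrightarrow> x < y) \<longleftrightarrow> (\<forall>z\<in>A. x < -z)" by (metis minus_minus)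
  also have "\<dots> \<longleftrightarrow> (\<forall>z\<in>A. z < -x)" by (simp add: less_minus_iff)
  finally show "x \<in> below (negs A) \<longleftrightarrow> x \<in> negs (above A)" by (simp add: below_def above_def Ball_def)
qed
lemma above_negs: "above (negs A) = negs (below A)"
proof (rule set_eqI)
  fix x :: rat
  have "(\<forall>y. -y \<in> A \<longrightarrow> y < x) \<longleftrightarrow> (\<forall>z\<in>A. -z < x)" by (metis minus_minus)
  also have "\<dots> \<longleftrightarrow> (\<forall>z\<in>A. -x < z)" by (simp add: minus_less_iff)
  finally show "x \<in> above (negs A) \<longleftrightarrow> x \<in> negs (below A)" by (simp add: below_def above_def Ball_def)
qed

lemma has_max_negs: "has_max (negs B) \<longleftrightarrow> has_min B"
  unfolding has_max_def has_min_def negs_def by (auto, metis minus_le_iff minus_minus, metis minus_le_iff minus_minus)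
lemma has_min_negs: "has_min (negs B) \<longleftrightarrow> has_max B"
  unfolding has_max_def has_min_def negs_def by (auto, metis le_minus_iff minus_minus, metis le_minus_iff minus_minus)

lemma fr_AutQ:
  assumes f: "f \<in> AutQ" shows "(\<lambda>x. - f (- x)) \<in> AutQ"
proof (rule bij_from_mono_surj)
  have sm: "strict_mono f" using f AutQ_D by blast
  show "strict_mono (\<lambda>x. - f (- x))"
    by (rule strict_monoI) (simp add: strict_mono_less[OF sm])
  fix y
  have bf: "bij f" using f AutQ_D by blast
  have "- f (- (- inv f (-y))) = y" using bf by (simp add: bij_is_surj surj_f_inv_f)
  then show "\<exists>x. - f (- x) = y" by blast
qed

lemma orb_fr:
  assumes f: "f \<in> AutQ" shows "orbital_at (\<lambda>x. - f (- x)) x = negs (orbital_at f (- x))"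
proof -
  let ?fr = "\<lambda>x. - f (- x)"
  have fr: "?fr \<in> AutQ" using fr_AutQ[OF f] .
  have bu: "bij (uminus :: rat \<Rightarrow> rat)" by (rule bijI) (auto intro: inj_onI surjI[of _ uminus])
  have c: "uminus \<circ> ?fr = f \<circ> uminus" by (simp add: fun_eq_iff)
  have e: "ipow f n (- y) = - ipow ?fr n y" for n y
    using ipow_conj[OF conjunct1[OF AutQ_D[OF f]] conjunct1[OF AutQ_D[OF fr]] bu c, of n]
    by (metis comp_apply)
  have e2: "ipow ?fr n y = - ipow f n (- y)" for n y using e[of n y] by simp
  show ?thesis unfolding orbital_at_def negs_def
    by (auto simp: e2) (metis le_minus_iff minus_le_iff)+
qed

lemma restr_fr: "restr (\<lambda>x. - f (- x)) (negs S) = (\<lambda>x. - restr f S (- x))"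
  by (simp add: restr_def fun_eq_iff)

lemma conj_decr:
  fixes f :: "rat \<Rightarrow> rat" and a c :: "nat \<Rightarrow> rat"
  assumes f: "f \<in> AutQ"
    and mv: "\<And>i. f (a i) \<noteq> a i"
    and dir: "\<And>i. (a i < f (a i)) \<longleftrightarrow> (a 0 < f (a 0))"
    and lo: "\<And>i. has_min (above (orbital_at f (a i))) \<longleftrightarrow> has_min (above (orbital_at f (a 0)))"
    and hi: "\<And>i. has_max (below (orbital_at f (a i))) \<longleftrightarrow> has_max (below (orbital_at f (a 0)))"
    and c1: "\<And>i. c i \<in> below (orbital_at f (a i))"
    and c2: "\<And>i. c i \<in> above (orbital_at f (a (Suc i)))"
    and gapL: "\<And>i. \<exists>x. x < c i \<and> x \<in> above (orbital_at f (a (Suc i)))"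
    and gapR: "\<And>i. \<exists>x. c i < x \<and> x \<in> below (orbital_at f (a i))"
    and gap0: "\<exists>x. x \<in> above (orbital_at f (a 0))"
  shows "\<exists>h\<in>AutQ. h \<circ> restr f (\<Union>i. orbital_at f (a (Suc i))) = restr f (\<Union>i. orbital_at f (a i)) \<circ> h"
proof -
  let ?fr = "\<lambda>x. - f (- x)"
  define a' where "a' = (\<lambda>i. - a i)"
  define c' where "c' = (\<lambda>i. - c i)"
  have fr: "?fr \<in> AutQ" using fr_AutQ[OF f] .
  have O': "orbital_at ?fr (a' i) = negs (orbital_at f (a i))" for i
    using orb_fr[OF f] by (simp add: a'_def)
  have mv': "?fr (a' i) \<noteq> a' i" for i using mv[of i] by (simp add: a'_def)
  have d1: "(a' i < ?fr (a' i)) \<longleftrightarrow> \<not> (a i < f (a i))" for i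
    using mv[of i] by (auto simp: a'_def)
  have dir': "(a' i < ?fr (a' i)) \<longleftrightarrow> (a' 0 < ?fr (a' 0))" for i
    using d1[of i] d1[of 0] dir[of i] by simp
  have lo': "has_max (below (orbital_at ?fr (a' i))) \<longleftrightarrow> has_max (below (orbital_at ?fr (a' 0)))" for i
    using lo[of i] by (simp add: O' below_negs has_max_negs)
  have hi': "has_min (above (orbital_at ?fr (a' i))) \<longleftrightarrow> has_min (above (orbital_at ?fr (a' 0)))" for i
    using hi[of i] by (simp add: O' above_negs has_min_negs)
  have c1': "c' i \<in> above (orbital_at ?fr (a' i))" for i using c1[of i] by (simp add: O' above_negs c'_def)
  have c2': "c' i \<in> below (orbital_at ?fr (a' (Suc i)))" for i using c2[of i] by (simp add: O' below_negs c'_def)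
  have gapL': "\<exists>x. c' i < x \<and> x \<in> below (orbital_at ?fr (a' (Suc i)))" for i
  proof -
    obtain x where "x < c i" "x \<in> above (orbital_at f (a (Suc i)))" using gapL by blast
    then show ?thesis by (intro exI[of _ "-x"]) (simp add: O' below_negs c'_def)
  qed
  have gapR': "\<exists>x. x < c' i \<and> x \<in> above (orbital_at ?fr (a' i))" for i
  proof -
    obtain x where "c i < x" "x \<in> below (orbital_at f (a i))" using gapR by blast
    then show ?thesis by (intro exI[of _ "-x"]) (simp add: O' above_negs c'_def)
  qed
  have gap0': "\<exists>x. x \<in> below (orbital_at ?fr (a' 0))"
  proof -
    obtain x where "x \<in> above (orbital_at f (a 0))" using gap0 by blast
    then show ?thesis by (intro exI[of _ "-x"]) (simp add: O' below_negs)
  qed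
  obtain h' where h': "h' \<in> AutQ"
    "h' \<circ> restr ?fr (\<Union>i. orbital_at ?fr (a' (Suc i))) = restr ?fr (\<Union>i. orbital_at ?fr (a' i)) \<circ> h'"
    using conj_incr[OF fr mv' dir' lo' hi' c1' c2' gapL' gapR' gap0'] by blast
  have U: "(\<Union>i. orbital_at ?fr (a' (Suc i))) = negs (\<Union>i. orbital_at f (a (Suc i)))"
          "(\<Union>i. orbital_at ?fr (a' i)) = negs (\<Union>i. orbital_at f (a i))"
    by (auto simp: O')
  define h where "h = (\<lambda>x. - h' (- x))"
  have hA: "h \<in> AutQ" using fr_AutQ[OF h'(1)] by (simp add: h_def)
  have "h (restr f (\<Union>i. orbital_at f (a (Suc i))) x) = restr f (\<Union>i. orbital_at f (a i)) (h x)" for x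
    using fun_cong[OF h'(2), of "-x"] unfolding U restr_fr by (simp add: h_def)
  then show ?thesis using hA by (intro bexI[of _ h]) (auto simp: fun_eq_iff)
qed


lemma assemble:
  fixes f :: "rat \<Rightarrow> rat" and a :: "nat \<Rightarrow> rat"
  assumes f: "f \<in> AutQ" and mv: "\<And>i. f (a i) \<noteq> a i"
    and dist: "\<And>i j. i \<noteq> j \<Longrightarrow> orbital_at f (a i) \<noteq> orbital_at f (a j)"
    and hex: "\<exists>h\<in>AutQ. h \<circ> restr f (\<Union>i. orbital_at f (a (Suc i))) = restr f (\<Union>i. orbital_at f (a i)) \<circ> h"
  shows "\<exists>g\<in>AutQ. \<exists>g1\<in>AutQ. \<exists>g2\<in>AutQ.
              is_restriction g f \<and> is_bump g1 \<and> is_orbital_elem g1 g \<and>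
              g = g1 \<circ> g2 \<and> conj_in_AutQ g g2"
proof -
  define Ob where "Ob = (\<lambda>i. orbital_at f (a i))"
  define S where "S = (\<Union>i. Ob i)"
  define S2 where "S2 = (\<Union>i. Ob (Suc i))"
  define g where "g = restr f S"
  define g1 where "g1 = restr f (Ob 0)"
  define g2 where "g2 = restr f S2"
  have orbeq: "x \<in> Ob i \<Longrightarrow> orbital_at f x = Ob i" for x i using orb_eq[OF f] by (simp add: Ob_def)
  have disj: "i \<noteq> j \<Longrightarrow> Ob i \<inter> Ob j = {}" for i j using orb_disj[OF f] dist by (simp add: Ob_def)
  have suppf: "Ob i \<subseteq> supp f" for i using orb_moved[OF f mv] by (auto simp: Ob_def supp_def)
  have uS: "x \<in> S \<Longrightarrow> orbital_at f x \<subseteq> S" for x using orbeq by (auto simp: S_def)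
  have uS1: "x \<in> Ob 0 \<Longrightarrow> orbital_at f x \<subseteq> Ob 0" for x using orbeq by auto
  have uS2: "x \<in> S2 \<Longrightarrow> orbital_at f x \<subseteq> S2" for x using orbeq by (auto simp: S2_def)
  have gA: "g \<in> AutQ" "g1 \<in> AutQ" "g2 \<in> AutQ"
    using restr_AutQ[OF f uS] restr_AutQ[OF f uS1] restr_AutQ[OF f uS2] by (simp_all add: g_def g1_def g2_def)
  have Ssupp: "S \<subseteq> supp f" using suppf by (auto simp: S_def)
  have suppg: "supp g = S" using restr_supp[OF Ssupp] by (simp add: g_def)
  have suppg1: "supp g1 = Ob 0" using restr_supp[OF suppf] by (simp add: g1_def)
  have R: "is_restriction g f" using suppg Ssupp by (auto simp: is_restriction_def g_def restr_def)
  have a0: "a 0 \<in> Ob 0" using orb_refl by (simp add: Ob_def)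
  have B: "is_bump g1"
  proof -
    have "g1 \<noteq> id" using a0 mv[of 0] by (auto simp: g1_def restr_def fun_eq_iff)
    moreover have "orbital_at g1 x = Ob 0" if "x \<in> Ob 0" for x
      using restr_orb[OF f uS1 that] orbeq[OF that] by (simp add: g1_def)
    then have "nontrivial_orbitals g1 = {Ob 0}" using NO_eq[OF gA(2)] suppg1 a0 by auto
    ultimately show ?thesis using gA(2) by (auto simp: is_bump_def)
  qed
  have OE: "is_orbital_elem g1 g"
    using B suppg1 suppg by (auto simp: is_orbital_elem_def g1_def g_def restr_def S_def)
  have gg: "g = g1 \<circ> g2"
  proof (rule ext)
    fix x
    show "g x = (g1 \<circ> g2) x"
    proof (cases "x \<in> Ob 0")
      case True
      then have "x \<notin> S2" using disj by (auto simp: S2_def)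
      then show ?thesis using True by (auto simp: g_def g1_def g2_def restr_def S_def)
    next
      case False
      show ?thesis
      proof (cases "x \<in> S2")
        case True
        then obtain i where i: "x \<in> Ob (Suc i)" by (auto simp: S2_def)
        have "f x \<in> Ob (Suc i)" using orb_inv_mem[OF f] i by (simp add: Ob_def)
        then have "f x \<notin> Ob 0" using disj[of "Suc i" 0] by auto
        then show ?thesis using True i by (auto simp: g_def g1_def g2_def restr_def S_def)
      next
        case False2: False
        then have "x \<notin> S" using False by (auto simp: S_def S2_def) (metis not0_implies_Suc)
        then show ?thesis using False False2 by (auto simp: g_def g1_def g2_def restr_def)
      qed
    qed
  qed
  obtain h where h: "h \<in> AutQ" "h \<circ> g2 = g \<circ> h" using hex by (auto simp: g_def g2_def S_def S2_def Ob_def)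
  have bh: "bij h" using h AutQ_D by blast
  have "g2 = inv h \<circ> g \<circ> h"
  proof -
    have "inv h \<circ> (h \<circ> g2) = g2" using bh by (simp add: fun_eq_iff bij_is_inj)
    then show ?thesis using h(2) by (simp add: comp_assoc)
  qed
  then have C: "conj_in_AutQ g g2" using h(1) by (auto simp: conj_in_AutQ_def)
  show ?thesis using gA R B OE gg C by blast
qed


lemma moved_nbrs:
  assumes f: "f \<in> AutQ" and m: "f c \<noteq> c"
  shows "\<exists>x\<in>orbital_at f c. c < x" "\<exists>x\<in>orbital_at f c. x < c"
proof -
  have bf: "bij f" and sm: "strict_mono f" using f AutQ_D by blast+
  have smi: "strict_mono (inv f)" using inv_AutQ[OF f] AutQ_D by blast
  have fi: "inv f (f c) = c" using bf by (simp add: bij_is_inj)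
  have mem: "f c \<in> orbital_at f c" "inv f c \<in> orbital_at f c" using orb_f[OF f] orb_invf[OF f] by blast+
  show "\<exists>x\<in>orbital_at f c. c < x"
  proof (cases "c < f c")
    case True then show ?thesis using mem by blast
  next
    case False
    then have "f c < c" using m by simp
    then have "inv f (f c) < inv f c" using strict_monoD[OF smi] by blast
    then show ?thesis using fi mem by auto
  qed
  show "\<exists>x\<in>orbital_at f c. x < c"
  proof (cases "f c < c")
    case True then show ?thesis using mem by blast
  next
    case False
    then have "c < f c" using m by simp
    then have "inv f c < inv f (f c)" using strict_monoD[OF smi] by blast
    then show ?thesis using fi mem by auto
  qed
qed

lemma lt_below: "lt_set A B \<Longrightarrow> x \<in> A \<Longrightarrow> x \<in> below B"
  by (auto simp: lt_set_def below_def)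
lemma lt_above: "lt_set A B \<Longrightarrow> x \<in> B \<Longrightarrow> x \<in> above A"
  by (auto simp: lt_set_def above_def)

lemma select:
  assumes f: "f \<in> AutQ" and inf: "infinite (nontrivial_orbitals f)"
  shows "\<exists>d::nat \<Rightarrow> rat. (\<forall>n. f (d n) \<noteq> d n)
     \<and> (\<forall>m n. m \<noteq> n \<longrightarrow> orbital_at f (d m) \<noteq> orbital_at f (d n))
     \<and> ((\<forall>m n. m < n \<longrightarrow> d m < d n) \<or> (\<forall>m n. m < n \<longrightarrow> d n < d m))
     \<and> (\<forall>n. (d n < f (d n) \<longleftrightarrow> d 0 < f (d 0))
          \<and> (has_max (below (orbital_at f (d n))) \<longleftrightarrow> has_max (below (orbital_at f (d 0))))
          \<and> (has_min (above (orbital_at f (d n))) \<longleftrightarrow> has_min (above (orbital_at f (d 0)))))"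
proof -
  let ?NO = "nontrivial_orbitals f"
  define rep where "rep = (\<lambda>U. SOME x. f x \<noteq> x \<and> orbital_at f x = U)"
  have rep: "f (rep U) \<noteq> rep U \<and> orbital_at f (rep U) = U" if "U \<in> ?NO" for U
  proof -
    have "\<exists>x. f x \<noteq> x \<and> orbital_at f x = U" using that NO_eq[OF f] by (auto simp: supp_def)
    then show ?thesis unfolding rep_def by (rule someI_ex)
  qed
  define \<tau> where "\<tau> = (\<lambda>U. (rep U < f (rep U), has_max (below U), has_min (above U)))"
  have "finite (\<tau> ` ?NO)" by (rule finite_subset[of _ UNIV]) auto
  then obtain U0 where U0: "U0 \<in> ?NO" "infinite {U \<in> ?NO. \<tau> U = \<tau> U0}"
    using pigeonhole_infinite[OF inf] by blast
  obtain e :: "nat \<Rightarrow> rat set" where e: "inj e" "range e \<subseteq> {U \<in> ?NO. \<tau> U = \<tau> U0}"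
    using infinite_countable_subset[OF U0(2)] by blast
  define p where "p = (\<lambda>n. rep (e n))"
  have eN: "e n \<in> ?NO" "\<tau> (e n) = \<tau> U0" for n using e(2) by auto
  have pe: "orbital_at f (p n) = e n" "f (p n) \<noteq> p n" for n using rep[OF eN(1)] by (simp_all add: p_def)
  obtain r where r: "strict_mono r" "monoseq (\<lambda>n. p (r n))" using seq_monosub[of p] by blast
  define d where "d = (\<lambda>n. p (r n))"
  have dist: "m \<noteq> n \<Longrightarrow> orbital_at f (d m) \<noteq> orbital_at f (d n)" for m n
    using pe e(1) r(1) by (simp add: d_def inj_eq strict_mono_eq)
  have dinj: "m \<noteq> n \<Longrightarrow> d m \<noteq> d n" for m n using dist by metis
  have mono: "(\<forall>m n. m < n \<longrightarrow> d m < d n) \<or> (\<forall>m n. m < n \<longrightarrow> d n < d m)"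
    using r(2) dinj unfolding monoseq_def d_def
    by (metis le_less nat_neq_iff)
  have unif: "(d n < f (d n) \<longleftrightarrow> d 0 < f (d 0))
          \<and> (has_max (below (orbital_at f (d n))) \<longleftrightarrow> has_max (below (orbital_at f (d 0))))
          \<and> (has_min (above (orbital_at f (d n))) \<longleftrightarrow> has_min (above (orbital_at f (d 0))))" for n
    using eN(2)[of "r n"] eN(2)[of "r 0"] pe by (simp add: \<tau>_def d_def p_def)
  have "\<forall>n. f (d n) \<noteq> d n" using pe(2) by (simp add: d_def)
  then show ?thesis using dist mono unif by blast
qed


theorem dir2:
  assumes f: "f \<in> AutQ" and inf: "infinite (nontrivial_orbitals f)"
  shows "\<exists>g\<in>AutQ. \<exists>g1\<in>AutQ. \<exists>g2\<in>AutQ.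
              is_restriction g f \<and> is_bump g1 \<and> is_orbital_elem g1 g \<and>
              g = g1 \<circ> g2 \<and> conj_in_AutQ g g2"
proof -
  from select[OF f inf] obtain d :: "nat \<Rightarrow> rat" where d: "(\<forall>n. f (d n) \<noteq> d n)
     \<and> (\<forall>m n. m \<noteq> n \<longrightarrow> orbital_at f (d m) \<noteq> orbital_at f (d n))
     \<and> ((\<forall>m n. m < n \<longrightarrow> d m < d n) \<or> (\<forall>m n. m < n \<longrightarrow> d n < d m))
     \<and> (\<forall>n. (d n < f (d n) \<longleftrightarrow> d 0 < f (d 0))
          \<and> (has_max (below (orbital_at f (d n))) \<longleftrightarrow> has_max (below (orbital_at f (d 0))))
          \<and> (has_min (above (orbital_at f (d n))) \<longleftrightarrow> has_min (above (orbital_at f (d 0)))))" ..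
  have mv: "\<And>n. f (d n) \<noteq> d n" using d by blast
  have dist: "\<And>m n. m \<noteq> n \<Longrightarrow> orbital_at f (d m) \<noteq> orbital_at f (d n)" using d by blast
  have mono: "(\<forall>m n. m < n \<longrightarrow> d m < d n) \<or> (\<forall>m n. m < n \<longrightarrow> d n < d m)" using d by blast
  have unif: "\<And>n. (d n < f (d n) \<longleftrightarrow> d 0 < f (d 0))
          \<and> (has_max (below (orbital_at f (d n))) \<longleftrightarrow> has_max (below (orbital_at f (d 0))))
          \<and> (has_min (above (orbital_at f (d n))) \<longleftrightarrow> has_min (above (orbital_at f (d 0))))"
    using d by blast
  define a where "a = (\<lambda>i. d (2*i+1))"
  define c where "c = (\<lambda>i. d (2*i+2))"
  have mva: "\<And>i. f (a i) \<noteq> a i" using mv by (simp add: a_def)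
  have dista: "\<And>i j. i \<noteq> j \<Longrightarrow> orbital_at f (a i) \<noteq> orbital_at f (a j)" using dist by (simp add: a_def)
  have dir: "\<And>i. (a i < f (a i)) \<longleftrightarrow> (a 0 < f (a 0))"
    using unif[of "2*i+1" for i] unif[of 1] by (simp add: a_def)
  have lo: "\<And>i. has_max (below (orbital_at f (a i))) \<longleftrightarrow> has_max (below (orbital_at f (a 0)))"
    using unif[of "2*i+1" for i] unif[of 1] by (simp add: a_def)
  have hi: "\<And>i. has_min (above (orbital_at f (a i))) \<longleftrightarrow> has_min (above (orbital_at f (a 0)))"
    using unif[of "2*i+1" for i] unif[of 1] by (simp add: a_def)
  have ordd: "lt_set (orbital_at f (d m)) (orbital_at f (d n))" if "d m < d n" for m n
  proof -
    have "m \<noteq> n" using that by auto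
    then show ?thesis using orb_ordered[OF f that] dist by blast
  qed
  have ic: "orbital_at f (c i) \<noteq> {}" "c i \<in> orbital_at f (c i)" for i using orb_refl by blast+
  have hex: "\<exists>h\<in>AutQ. h \<circ> restr f (\<Union>i. orbital_at f (a (Suc i))) = restr f (\<Union>i. orbital_at f (a i)) \<circ> h"
  proof (cases "\<forall>m n. m < n \<longrightarrow> d m < d n")
    case True
    have L: "lt_set (orbital_at f (d m)) (orbital_at f (d n))" if "m < n" for m n using True that ordd by blast
    have L1: "lt_set (orbital_at f (a i)) (orbital_at f (c i))" for i using L[of "2*i+1" "2*i+2"] by (simp add: a_def c_def)
    have L2: "lt_set (orbital_at f (c i)) (orbital_at f (a (Suc i)))" for i using L[of "2*i+2" "Suc (Suc (Suc (2*i)))"] by (simp add: a_def c_def)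
    have L3: "lt_set (orbital_at f (d 0)) (orbital_at f (a 0))" using L[of 0 1] by (simp add: a_def)
    have c1: "\<And>i. c i \<in> above (orbital_at f (a i))" using lt_above[OF L1 ic(2)] .
    have c2: "\<And>i. c i \<in> below (orbital_at f (a (Suc i)))" using lt_below[OF L2 ic(2)] .
    have gapL: "\<exists>x. c i < x \<and> x \<in> below (orbital_at f (a (Suc i)))" for i
    proof -
      obtain x where "x \<in> orbital_at f (c i)" "c i < x" using moved_nbrs(1)[OF f mv[of "2*i+2"]] by (auto simp: c_def)
      then show ?thesis using lt_below[OF L2] by blast
    qed
    have gapR: "\<exists>x. x < c i \<and> x \<in> above (orbital_at f (a i))" for i
    proof -
      obtain x where "x \<in> orbital_at f (c i)" "x < c i" using moved_nbrs(2)[OF f mv[of "2*i+2"]] by (auto simp: c_def)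
      then show ?thesis using lt_above[OF L1] by blast
    qed
    have gap0: "\<exists>x. x \<in> below (orbital_at f (a 0))" using lt_below[OF L3 orb_refl] by blast
    show ?thesis using conj_incr[OF f mva dir lo hi c1 c2 gapL gapR gap0] .
  next
    case False
    then have D: "\<forall>m n. m < n \<longrightarrow> d n < d m" using mono by blast
    have L: "lt_set (orbital_at f (d n)) (orbital_at f (d m))" if "m < n" for m n using D that ordd by blast
    have L1: "lt_set (orbital_at f (c i)) (orbital_at f (a i))" for i using L[of "2*i+1" "2*i+2"] by (simp add: a_def c_def)
    have L2: "lt_set (orbital_at f (a (Suc i))) (orbital_at f (c i))" for i using L[of "2*i+2" "Suc (Suc (Suc (2*i)))"] by (simp add: a_def c_def)
    have L3: "lt_set (orbital_at f (a 0)) (orbital_at f (d 0))" using L[of 0 1] by (simp add: a_def)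
    have c1: "\<And>i. c i \<in> below (orbital_at f (a i))" using lt_below[OF L1 ic(2)] .
    have c2: "\<And>i. c i \<in> above (orbital_at f (a (Suc i)))" using lt_above[OF L2 ic(2)] .
    have gapL: "\<exists>x. x < c i \<and> x \<in> above (orbital_at f (a (Suc i)))" for i
    proof -
      obtain x where "x \<in> orbital_at f (c i)" "x < c i" using moved_nbrs(2)[OF f mv[of "2*i+2"]] by (auto simp: c_def)
      then show ?thesis using lt_above[OF L2] by blast
    qed
    have gapR: "\<exists>x. c i < x \<and> x \<in> below (orbital_at f (a i))" for i
    proof -
      obtain x where "x \<in> orbital_at f (c i)" "c i < x" using moved_nbrs(1)[OF f mv[of "2*i+2"]] by (auto simp: c_def)
      then show ?thesis using lt_below[OF L1] by blast
    qed
    have gap0: "\<exists>x. x \<in> above (orbital_at f (a 0))" using lt_above[OF L3 orb_refl] by blast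
    show ?thesis using conj_decr[OF f mva dir hi lo c1 c2 gapL gapR gap0] .
  qed
  show ?thesis using assemble[OF f mva dista hex] .
qed


theorem corollary2p3:
  assumes "f \<in> AutQ"
  shows "(\<not> (\<exists>g \<in> AutQ. \<exists>g1 \<in> AutQ. \<exists>g2 \<in> AutQ.
              is_restriction g f \<and> is_bump g1 \<and> is_orbital_elem g1 g \<and>
              g = g1 \<circ> g2 \<and> conj_in_AutQ g g2))
         \<longleftrightarrow> finite (nontrivial_orbitals f)"
  proof
  assume "\<not> (\<exists>g \<in> AutQ. \<exists>g1 \<in> AutQ. \<exists>g2 \<in> AutQ.
              is_restriction g f \<and> is_bump g1 \<and> is_orbital_elem g1 g \<and>
              g = g1 \<circ> g2 \<and> conj_in_AutQ g g2)"
  then show "finite (nontrivial_orbitals f)" using dir2[OF assms] by blast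
next
  assume "finite (nontrivial_orbitals f)"
  then show "\<not> (\<exists>g \<in> AutQ. \<exists>g1 \<in> AutQ. \<exists>g2 \<in> AutQ.
              is_restriction g f \<and> is_bump g1 \<and> is_orbital_elem g1 g \<and>
              g = g1 \<circ> g2 \<and> conj_in_AutQ g g2)"
    using dir1[OF assms] by blast
qed

end
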